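(* Let $N\ge3$, $\Omega\subset\mathbb{R}^N$ a bounded domain, $1<p<\infty$, and suppose $Q$, $v$ satisfy hypothesis (H). Then $C^{0,1}_c(\Omega)$ is dense in $\mathring H^{1,p}_Q(\Omega)\cap L^2_v(\Omega)$, equipped with the norm $\|u\|_{H^{1,p}_Q}+\|u\|_{L^2_v}$.
   Context: $p'=p/(p-1)$. $Q:\Omega\to\mathbb{R}^{N\times N}$ is measurable, symmetric and positive definite a.e., with $|Q|_{\rm op}\in L^1_{loc}(\Omega)$ ($|\cdot|_{\rm op}$ the operator norm; $\sqrt Q$ defined pointwise). $v\ge0$ is a measurable weight. Hypothesis (H): $v\in L^1(\Omega)$; $|\sqrt Q(x)|_{\rm op}^p\le v(x)$ a.e.; $|(\sqrt Q)^{-1}|_{\rm op}\in L^{p'}_{loc}(\Omega)$. $L^q_v(\Omega)$ is $L^q$ w.r.t. $v\,dx$. $\mathcal L^p_Q(\Omega)$: vector fields with $\|\vec f\|_{\mathcal L^p_Q}=(\int_\Omega|\sqrt Q\vec f|^pdx)^{1/p}<\infty$. $H^{1,p}_Q(\Omega)$: completion of Lipschitz functions on $\overline\Omega$ under $\|u\|_{H^{1,p}_Q}=\|u\|_{L^p_v}+\|\nabla u\|_{\mathcal L^p_Q}$ (elements are functions in $L^p_v\cap W^{1,1}_{loc}$ with weak gradient in $\mathcal L^p_Q$); $\mathring H^{1,p}_Q(\Omega)$: closure of the compactly supported Lipschitz functions $C^{0,1}_c(\Omega)$ in $H^{1,p}_Q(\Omega)$. *)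

theory Defs
  imports "HOL-Analysis.Analysis"
begin

definition posdef_mat :: "real^'n^'n \<Rightarrow> bool" where
  "posdef_mat A \<longleftrightarrow> transpose A = A \<and> (\<forall>x. x \<noteq> 0 \<longrightarrow> 0 < x \<bullet> (A *v x))"

definition matsqrt :: "real^'n^'n \<Rightarrow> real^'n^'n" where
  "matsqrt A = (THE S. posdef_mat S \<and> S ** S = A)"

definition mat_opnorm :: "real^'n^'n \<Rightarrow> real" where
  "mat_opnorm A = onorm (\<lambda>x. A *v x)"

definition Lw_mem :: "real \<Rightarrow> ('a::euclidean_space \<Rightarrow> real) \<Rightarrow> 'a set \<Rightarrow> ('a \<Rightarrow> real) \<Rightarrow> bool" where
  "Lw_mem q v \<Omega> u \<longleftrightarrow> u \<in> borel_measurable (lebesgue_on \<Omega>) \<and>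
     (\<integral>\<^sup>+x\<in>\<Omega>. ennreal (\<bar>u x\<bar> powr q * v x) \<partial>lebesgue) < \<infinity>"

definition Lw_norm :: "real \<Rightarrow> ('a::euclidean_space \<Rightarrow> real) \<Rightarrow> 'a set \<Rightarrow> ('a \<Rightarrow> real) \<Rightarrow> real" where
  "Lw_norm q v \<Omega> u = enn2real (\<integral>\<^sup>+x\<in>\<Omega>. ennreal (\<bar>u x\<bar> powr q * v x) \<partial>lebesgue) powr (1 / q)"

definition LQ_mem :: "real \<Rightarrow> (real^'n \<Rightarrow> real^'n^'n) \<Rightarrow> (real^'n) set \<Rightarrow> (real^'n \<Rightarrow> real^'n) \<Rightarrow> bool" where
  "LQ_mem p Q \<Omega> f \<longleftrightarrow> f \<in> borel_measurable (lebesgue_on \<Omega>) \<and>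
     (\<integral>\<^sup>+x\<in>\<Omega>. ennreal (norm (matsqrt (Q x) *v f x) powr p) \<partial>lebesgue) < \<infinity>"

definition LQ_norm :: "real \<Rightarrow> (real^'n \<Rightarrow> real^'n^'n) \<Rightarrow> (real^'n) set \<Rightarrow> (real^'n \<Rightarrow> real^'n) \<Rightarrow> real" where
  "LQ_norm p Q \<Omega> f = enn2real (\<integral>\<^sup>+x\<in>\<Omega>. ennreal (norm (matsqrt (Q x) *v f x) powr p) \<partial>lebesgue) powr (1 / p)"

definition Lloc_mem :: "real \<Rightarrow> 'a::euclidean_space set \<Rightarrow> ('a \<Rightarrow> real) \<Rightarrow> bool" where
  "Lloc_mem q \<Omega> f \<longleftrightarrow> f \<in> borel_measurable (lebesgue_on \<Omega>) \<and>
     (\<forall>K. compact K \<and> K \<subseteq> \<Omega> \<longrightarrow> (\<integral>\<^sup>+x\<in>K. ennreal (\<bar>f x\<bar> powr q) \<partial>lebesgue) < \<infinity>)"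

text \<open>Compactly supported Lipschitz functions C^{0,1}_c(Omega) (extended by zero to R^N),
  and their (a.e. defined, by Rademacher) gradient.\<close>

definition lipc :: "(real^'n) set \<Rightarrow> (real^'n \<Rightarrow> real) \<Rightarrow> bool" where
  "lipc \<Omega> \<phi> \<longleftrightarrow> (\<exists>C. C-lipschitz_on UNIV \<phi>) \<and>
     compact (closure {x. \<phi> x \<noteq> 0}) \<and> closure {x. \<phi> x \<noteq> 0} \<subseteq> \<Omega>"

definition lgrad :: "(real^'n \<Rightarrow> real) \<Rightarrow> real^'n \<Rightarrow> real^'n" where
  "lgrad \<phi> x = (\<chi> i. frechet_derivative \<phi> (at x) (axis i 1))"

definition hypH :: "real \<Rightarrow> (real^'n \<Rightarrow> real^'n^'n) \<Rightarrow> (real^'n \<Rightarrow> real) \<Rightarrow> (real^'n) set \<Rightarrow> bool" where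
  "hypH p Q v \<Omega> \<longleftrightarrow>
     Q \<in> borel_measurable (lebesgue_on \<Omega>) \<and>
     (AE x in lebesgue_on \<Omega>. posdef_mat (Q x)) \<and>
     Lloc_mem 1 \<Omega> (\<lambda>x. mat_opnorm (Q x)) \<and>
     v \<in> borel_measurable (lebesgue_on \<Omega>) \<and> (\<forall>x\<in>\<Omega>. 0 \<le> v x) \<and>
     set_integrable lebesgue \<Omega> v \<and>
     (AE x in lebesgue_on \<Omega>. mat_opnorm (matsqrt (Q x)) powr p \<le> v x) \<and>
     Lloc_mem (p / (p - 1)) \<Omega> (\<lambda>x. mat_opnorm (matrix_inv (matsqrt (Q x))))"

text \<open>Norm on H^{1,p}_Q of a pair (u, grad u), and membership in the closure of
  C^{0,1}_c(Omega) (the completion is realised isometrically as pairs (u,g) in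
  L^p_v x \<L>^p_Q approximated by (phi, grad phi)).\<close>

definition H_norm :: "real \<Rightarrow> (real^'n \<Rightarrow> real^'n^'n) \<Rightarrow> (real^'n \<Rightarrow> real) \<Rightarrow> (real^'n) set \<Rightarrow>
    (real^'n \<Rightarrow> real) \<Rightarrow> (real^'n \<Rightarrow> real^'n) \<Rightarrow> real" where
  "H_norm p Q v \<Omega> u g = Lw_norm p v \<Omega> u + LQ_norm p Q \<Omega> g"

definition in_H0 :: "real \<Rightarrow> (real^'n \<Rightarrow> real^'n^'n) \<Rightarrow> (real^'n \<Rightarrow> real) \<Rightarrow> (real^'n) set \<Rightarrow>
    (real^'n \<Rightarrow> real) \<Rightarrow> (real^'n \<Rightarrow> real^'n) \<Rightarrow> bool" where
  "in_H0 p Q v \<Omega> u g \<longleftrightarrow> Lw_mem p v \<Omega> u \<and> LQ_mem p Q \<Omega> g \<and>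
     (\<exists>\<phi>. (\<forall>k. lipc \<Omega> (\<phi> k)) \<and>
        (\<lambda>k. H_norm p Q v \<Omega> (\<lambda>x. \<phi> k x - u x) (\<lambda>x. lgrad (\<phi> k) x - g x)) \<longlonglongrightarrow> 0)"

end

theory Submission
  imports Defs
begin

lemma sym_inner:
  fixes A :: "real^'n^'n"
  assumes "transpose A = A"
  shows "x \<bullet> (A *v y) = (A *v x) \<bullet> y"
proof -
  have "x \<bullet> (A *v y) = (x v* A) \<bullet> y" by (simp add: dot_lmul_matrix)
  also have "x v* A = transpose A *v x" by simp
  finally show ?thesis using assms by simp
qed

lemma quad_nonpos_lin_zero:
  fixes b c :: real
  assumes "\<And>t. 2 * t * b + t^2 * c \<le> 0"
  shows "b = 0"
proof (rule ccontr)
  assume "b \<noteq> 0"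
  define d where "d = \<bar>c\<bar> + 1"
  have pos: "d > 0" and dc: "2 * d + c > 0" unfolding d_def by (linarith, simp add: abs_if)
  define t where "t = b / d"
  have "2 * t * b + t^2 * c = (b / d)^2 * (2 * d + c)"
    unfolding t_def using pos by (simp add: field_simps power2_eq_square)
  moreover have "(b / d)^2 > 0" using \<open>b \<noteq> 0\<close> pos by simp
  moreover note dc
  ultimately have "2 * t * b + t^2 * c > 0" by simp
  with assms[of t] show False by simp
qed

lemma sym_eigvec:
  fixes A :: "real^'n^'n"
  assumes sym: "transpose A = A" and S: "subspace S" and nz: "\<exists>x\<in>S. x \<noteq> 0"
    and inv: "\<And>x. x \<in> S \<Longrightarrow> A *v x \<in> S"
  shows "\<exists>x\<in>S. norm x = 1 \<and> (\<exists>l. A *v x = l *\<^sub>R x)"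
proof -
  define K where "K = S \<inter> sphere 0 1"
  have "compact K" unfolding K_def
    by (simp add: S closed_subspace closed_Int_compact compact_sphere)
  obtain z where z: "z \<in> S" "z \<noteq> 0" using nz by auto
  have "z /\<^sub>R norm z \<in> K" unfolding K_def using z S
    by (simp add: subspace_scale)
  hence "K \<noteq> {}" by auto
  have cont: "continuous_on K (\<lambda>x. x \<bullet> (A *v x))"
    by (intro continuous_intros linear_continuous_on linear_linear[THEN iffD1] matrix_vector_mul_linear)
  obtain x0 where x0: "x0 \<in> K" and mx: "\<And>y. y \<in> K \<Longrightarrow> y \<bullet> (A *v y) \<le> x0 \<bullet> (A *v x0)"
    using continuous_attains_sup[OF \<open>compact K\<close> \<open>K \<noteq> {}\<close> cont] by auto
  define l where "l = x0 \<bullet> (A *v x0)"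
  have x0S: "x0 \<in> S" and nx0: "norm x0 = 1" using x0 unfolding K_def by auto
  have x0x0: "x0 \<bullet> x0 = 1" using nx0 by (simp add: dot_square_norm)
  have bound: "w \<bullet> (A *v w) \<le> l * (w \<bullet> w)" if "w \<in> S" for w
  proof (cases "w = 0")
    case True thus ?thesis by simp
  next
    case False
    have "w /\<^sub>R norm w \<in> K" unfolding K_def using that S False by (simp add: subspace_scale)
    from mx[OF this] have "(w /\<^sub>R norm w) \<bullet> (A *v (w /\<^sub>R norm w)) \<le> l" unfolding l_def .
    hence "(w \<bullet> (A *v w)) / (norm w)^2 \<le> l"
      by (simp add: matrix_vector_mult_scaleR power2_eq_square divide_inverse mult_ac)
    hence "w \<bullet> (A *v w) \<le> l * (norm w)^2" using False by (simp add: divide_le_eq)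
    thus ?thesis by (simp add: dot_square_norm)
  qed
  have orth: "y \<bullet> (A *v x0) = 0" if y: "y \<in> S" "y \<bullet> x0 = 0" for y
  proof -
    have "2 * t * (y \<bullet> (A *v x0)) + t^2 * (y \<bullet> (A *v y) - l * (y \<bullet> y)) \<le> 0" for t
    proof -
      have w: "x0 + t *\<^sub>R y \<in> S" using S x0S y by (simp add: subspace_add subspace_scale)
      have "x0 \<bullet> (A *v y) = y \<bullet> (A *v x0)" using sym_inner[OF sym, of x0 y] by (simp add: inner_commute)
      hence e1: "(x0 + t *\<^sub>R y) \<bullet> (A *v (x0 + t *\<^sub>R y)) = l + 2 * t * (y \<bullet> (A *v x0)) + t^2 * (y \<bullet> (A *v y))"
        unfolding l_def by (simp add: matrix_vector_right_distrib matrix_vector_mult_scaleR inner_add_left inner_add_right power2_eq_square algebra_simps)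
      have e2: "(x0 + t *\<^sub>R y) \<bullet> (x0 + t *\<^sub>R y) = 1 + t^2 * (y \<bullet> y)"
        using x0x0 y(2) by (simp add: inner_add_left inner_add_right inner_commute power2_eq_square algebra_simps)
      have "l + 2 * t * (y \<bullet> (A *v x0)) + t^2 * (y \<bullet> (A *v y)) \<le> l * (1 + t^2 * (y \<bullet> y))"
        using bound[OF w] unfolding e1 e2 .
      moreover have "2 * t * (y \<bullet> (A *v x0)) + t^2 * (y \<bullet> (A *v y) - l * (y \<bullet> y))
         = (l + 2 * t * (y \<bullet> (A *v x0)) + t^2 * (y \<bullet> (A *v y))) - l * (1 + t^2 * (y \<bullet> y))"
        by (simp add: algebra_simps)
      ultimately show ?thesis by linarith
    qed
    thus ?thesis by (rule quad_nonpos_lin_zero)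
  qed
  define y where "y = A *v x0 - l *\<^sub>R x0"
  have yS: "y \<in> S" unfolding y_def using S inv[OF x0S] x0S by (simp add: subspace_diff subspace_scale)
  have yx0: "y \<bullet> x0 = 0" unfolding y_def l_def using x0x0
    by (simp add: inner_diff_left inner_diff_right inner_commute)
  have "y \<bullet> y = y \<bullet> (A *v x0) - l * (y \<bullet> x0)" unfolding y_def by (simp add: inner_diff_right)
  also have "\<dots> = 0" using orth[OF yS yx0] yx0 by simp
  finally have "y = 0" by simp
  hence "A *v x0 = l *\<^sub>R x0" unfolding y_def by simp
  thus ?thesis using x0S nx0 by blast
qed

definition oeig :: "real^'n^'n \<Rightarrow> (real^'n) set \<Rightarrow> bool" where
  "oeig A B \<longleftrightarrow> finite B \<and> pairwise orthogonal B \<and> (\<forall>b\<in>B. norm b = 1 \<and> (\<exists>l. A *v b = l *\<^sub>R b))"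

lemma oeig_inner:
  assumes "oeig A B" "b \<in> B" "c \<in> B"
  shows "b \<bullet> c = (if b = c then 1 else 0)"
proof (cases "b = c")
  case True
  have "norm b = 1" using assms unfolding oeig_def by auto
  thus ?thesis using True by (simp add: norm_eq_1)
next
  case False
  thus ?thesis using assms unfolding oeig_def pairwise_def orthogonal_def by auto
qed

lemma oeig_sum_inner:
  assumes "oeig A B" "c \<in> B"
  shows "c \<bullet> (\<Sum>b\<in>B. f b *\<^sub>R b) = f c"
proof -
  have "c \<bullet> (\<Sum>b\<in>B. f b *\<^sub>R b) = (\<Sum>b\<in>B. f b * (c \<bullet> b))" by (simp add: inner_sum_right)
  also have "\<dots> = (\<Sum>b\<in>B. if b = c then f b else 0)"
    by (rule sum.cong) (auto simp: oeig_inner[OF assms(1) assms(2)])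
  also have "\<dots> = f c" using assms unfolding oeig_def by (simp add: sum.delta')
  finally show ?thesis .
qed

lemma sym_eigenbasis:
  fixes A :: "real^'n^'n"
  assumes sym: "transpose A = A"
  shows "\<exists>B. oeig A B \<and> (\<forall>x. x = (\<Sum>b\<in>B. (b \<bullet> x) *\<^sub>R b))"
proof -
  have bnd: "card B \<le> DIM(real^'n)" if "oeig A B" for B
  proof -
    have "0 \<notin> B" using that unfolding oeig_def by auto
    hence "independent B" using that pairwise_orthogonal_independent unfolding oeig_def by blast
    thus ?thesis using independent_bound by blast
  qed
  have "oeig A {}" unfolding oeig_def by simp
  have "\<exists>k. (\<exists>B. oeig A B \<and> card B = k) \<and> (\<forall>y. (\<exists>B. oeig A B \<and> card B = y) \<longrightarrow> y \<le> k)"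
    by (rule Nat.ex_has_greatest_nat[where k=0 and b="DIM(real^'n)"]) (use \<open>oeig A {}\<close> bnd in auto)
  then obtain k where "\<exists>B. oeig A B \<and> card B = k" and kmax: "\<And>B. oeig A B \<Longrightarrow> card B \<le> k"
    by blast
  then obtain B where B: "oeig A B" "card B = k" by blast
  have fin: "finite B" using B unfolding oeig_def by simp
  show ?thesis
  proof (rule ccontr)
    assume "\<not> ?thesis"
    then obtain x where x: "x \<noteq> (\<Sum>b\<in>B. (b \<bullet> x) *\<^sub>R b)" using B by blast
    define z where "z = x - (\<Sum>b\<in>B. (b \<bullet> x) *\<^sub>R b)"
    define S where "S = {y. \<forall>b\<in>B. b \<bullet> y = 0}"
    have zS: "z \<in> S" unfolding S_def z_def using oeig_sum_inner[OF B(1)] by (simp add: inner_diff_right)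
    have z0: "z \<noteq> 0" unfolding z_def using x by simp
    have sub: "subspace S" unfolding subspace_def S_def by (simp add: inner_add_right)
    have inv: "A *v y \<in> S" if "y \<in> S" for y
    proof -
      { fix b assume b: "b \<in> B"
        then obtain l where "A *v b = l *\<^sub>R b" using B unfolding oeig_def by auto
        hence "b \<bullet> (A *v y) = l * (b \<bullet> y)" using sym_inner[OF sym, of b y] by simp
        hence "b \<bullet> (A *v y) = 0" using that b unfolding S_def by simp }
      thus ?thesis unfolding S_def by simp
    qed
    obtain e where e: "e \<in> S" "norm e = 1" "\<exists>l. A *v e = l *\<^sub>R e"
      using sym_eigvec[OF sym sub _ inv] zS z0 by blast
    have eB: "e \<notin> B"
    proof
      assume "e \<in> B"
      hence "e \<bullet> e = 0" using e(1) unfolding S_def by simp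
      thus False using e(2) by simp
    qed
    have "oeig A (insert e B)"
      using B(1) e eB unfolding oeig_def S_def pairwise_insert orthogonal_def
      by (auto simp: inner_commute)
    from kmax[OF this] have "card (insert e B) \<le> k" .
    thus False using fin eB B(2) by simp
  qed
qed

lemma mv_sum: "(M::real^'n^'n) *v (\<Sum>b\<in>B. g b) = (\<Sum>b\<in>B. M *v g b)"
  using linear_sum[OF matrix_vector_mul_linear[of M], of g B] by (simp add: o_def)

lemma posdef_sqrt_ex1:
  fixes A :: "real^'n^'n"
  assumes pd: "posdef_mat A"
  shows "\<exists>S. posdef_mat S \<and> S ** S = A \<and> (\<forall>T. posdef_mat T \<and> T ** T = A \<longrightarrow> T = S)"
proof -
  have sym: "transpose A = A" and pos: "\<And>x. x \<noteq> 0 \<Longrightarrow> 0 < x \<bullet> (A *v x)"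
    using pd unfolding posdef_mat_def by auto
  obtain B where B: "oeig A B" and exp: "\<And>x. x = (\<Sum>b\<in>B. (b \<bullet> x) *\<^sub>R b)"
    using sym_eigenbasis[OF sym] by blast
  have fin: "finite B" using B unfolding oeig_def by simp
  define L where "L b = (SOME l. A *v b = l *\<^sub>R b)" for b
  have AL: "A *v b = L b *\<^sub>R b" if "b \<in> B" for b
  proof -
    have "\<exists>l. A *v b = l *\<^sub>R b" using B that unfolding oeig_def by auto
    thus ?thesis unfolding L_def by (rule someI_ex)
  qed
  have Lpos: "L b > 0" if "b \<in> B" for b
  proof -
    have n1: "norm b = 1" using B that unfolding oeig_def by auto
    hence "b \<noteq> 0" by auto
    from pos[OF this] have "0 < b \<bullet> (L b *\<^sub>R b)" using AL[OF that] by simp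
    also have "\<dots> = L b" using n1 by (simp add: norm_eq_1)
    finally show ?thesis .
  qed
  define f where "f x = (\<Sum>b\<in>B. (sqrt (L b) * (b \<bullet> x)) *\<^sub>R b)" for x
  have lin: "linear f"
    by (rule linearI) (simp_all add: f_def inner_add_right distrib_left scaleR_add_left sum.distrib scaleR_sum_right mult.left_commute)
  define S where "S = matrix f"
  have Sf: "S *v x = f x" for x unfolding S_def using matrix_vector_mul(2)[OF lin] by metis
  have bf: "b \<bullet> f x = sqrt (L b) * (b \<bullet> x)" if "b \<in> B" for b x
    unfolding f_def by (rule oeig_sum_inner[OF B that])
  have Aexp: "A *v x = (\<Sum>b\<in>B. (L b * (b \<bullet> x)) *\<^sub>R b)" for x
  proof -
    have "A *v x = A *v (\<Sum>b\<in>B. (b \<bullet> x) *\<^sub>R b)" using exp[of x] by simp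
    also have "\<dots> = (\<Sum>b\<in>B. (b \<bullet> x) *\<^sub>R (A *v b))" by (simp add: mv_sum matrix_vector_mult_scaleR)
    also have "\<dots> = (\<Sum>b\<in>B. (L b * (b \<bullet> x)) *\<^sub>R b)" by (rule sum.cong) (simp_all add: AL)
    finally show ?thesis .
  qed
  have SS: "S ** S = A"
  proof -
    { fix x
      have "(S ** S) *v x = f (f x)" by (simp add: matrix_vector_mul_assoc[symmetric] Sf)
      also have "\<dots> = (\<Sum>b\<in>B. (sqrt (L b) * (sqrt (L b) * (b \<bullet> x))) *\<^sub>R b)"
        unfolding f_def[of "f x"] by (rule sum.cong) (simp_all add: bf)
      also have "\<dots> = A *v x" unfolding Aexp
        by (rule sum.cong) (use Lpos in \<open>simp_all add: mult.assoc[symmetric] less_imp_le\<close>)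
      finally have "(S ** S) *v x = A *v x" . }
    thus ?thesis by (simp add: matrix_eq)
  qed
  have fsym: "y \<bullet> f x = f y \<bullet> x" for x y
  proof -
    have "y \<bullet> f x = (\<Sum>b\<in>B. sqrt (L b) * (b \<bullet> x) * (y \<bullet> b))" unfolding f_def by (simp add: inner_sum_right)
    also have "\<dots> = (\<Sum>b\<in>B. sqrt (L b) * (b \<bullet> y) * (b \<bullet> x))" by (rule sum.cong) (simp_all add: inner_commute)
    also have "\<dots> = f y \<bullet> x" unfolding f_def by (simp add: inner_sum_left)
    finally show ?thesis .
  qed
  have tS: "transpose S = S"
  proof -
    { fix x
      define a where "a = transpose S *v x - S *v x"
      have "a \<bullet> y = 0" for y
      proof -
        have "(transpose S *v x) \<bullet> y = x \<bullet> (S *v y)" by (simp add: dot_lmul_matrix)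
        also have "\<dots> = (S *v x) \<bullet> y" by (simp add: Sf fsym)
        finally show ?thesis unfolding a_def by (simp add: inner_diff_left)
      qed
      from this[of a] have "a = 0" by simp
      hence "transpose S *v x = S *v x" unfolding a_def by simp }
    thus ?thesis by (simp add: matrix_eq)
  qed
  have Spos: "0 < x \<bullet> (S *v x)" if "x \<noteq> 0" for x
  proof -
    have xf: "x \<bullet> (S *v x) = (\<Sum>b\<in>B. sqrt (L b) * (b \<bullet> x)^2)"
      unfolding Sf f_def by (simp add: inner_sum_right inner_commute power2_eq_square mult.assoc)
    obtain c where c: "c \<in> B" "c \<bullet> x \<noteq> 0"
    proof (rule ccontr)
      assume "\<not> thesis"
      hence "\<forall>c\<in>B. c \<bullet> x = 0" using that by blast
      hence "x = 0" using exp[of x] by simp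
      thus False using \<open>x \<noteq> 0\<close> by simp
    qed
    have "0 < sqrt (L c) * (c \<bullet> x)^2" using Lpos[OF c(1)] c(2) by simp
    also have "\<dots> \<le> (\<Sum>b\<in>B. sqrt (L b) * (b \<bullet> x)^2)"
      by (rule member_le_sum) (use c fin Lpos in \<open>auto simp: less_imp_le\<close>)
    finally show ?thesis using xf by simp
  qed
  have Spd: "posdef_mat S" unfolding posdef_mat_def using tS Spos by blast
  have uniq: "T = S" if T: "posdef_mat T" "T ** T = A" for T
  proof -
    have Tpos: "\<And>x. x \<noteq> 0 \<Longrightarrow> 0 < x \<bullet> (T *v x)" using T(1) unfolding posdef_mat_def by auto
    have Tb: "T *v b = sqrt (L b) *\<^sub>R b" if bB: "b \<in> B" for b
    proof -
      define s where "s = sqrt (L b)"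
      have L0: "L b \<ge> 0" using Lpos[OF bB] by linarith
      have ss: "s * s = L b" unfolding s_def using L0 by simp
      have s0: "s \<ge> 0" unfolding s_def using L0 by simp
      define y where "y = T *v b - s *\<^sub>R b"
      have "T *v y + s *\<^sub>R y = (T ** T) *v b - (s * s) *\<^sub>R b"
        unfolding y_def by (simp add: matrix_vector_mult_diff_distrib matrix_vector_mult_scaleR
            matrix_vector_mul_assoc[symmetric] algebra_simps)
      also have "\<dots> = 0" using T(2) AL[OF bB] ss by simp
      finally have "T *v y = - (s *\<^sub>R y)" by (simp add: add_eq_0_iff)
      hence e: "y \<bullet> (T *v y) = - (s * (y \<bullet> y))" by simp
      have "y = 0"
      proof (rule ccontr)
        assume "y \<noteq> 0"
        from Tpos[OF this] e have "0 < - (s * (y \<bullet> y))" by simp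
        moreover have "s * (y \<bullet> y) \<ge> 0" using s0 by simp
        ultimately show False by simp
      qed
      thus ?thesis unfolding y_def s_def by simp
    qed
    { fix x
      have "T *v x = T *v (\<Sum>b\<in>B. (b \<bullet> x) *\<^sub>R b)" using exp[of x] by simp
      also have "\<dots> = (\<Sum>b\<in>B. (b \<bullet> x) *\<^sub>R (T *v b))" by (simp add: mv_sum matrix_vector_mult_scaleR)
      also have "\<dots> = f x" unfolding f_def by (rule sum.cong) (simp_all add: Tb)
      finally have "T *v x = S *v x" by (simp add: Sf) }
    thus ?thesis by (simp add: matrix_eq)
  qed
  show ?thesis using Spd SS uniq by blast
qed

lemma matsqrt_props:
  assumes "posdef_mat (A::real^'n^'n)"
  shows "posdef_mat (matsqrt A) \<and> matsqrt A ** matsqrt A = A"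
proof -
  from posdef_sqrt_ex1[OF assms] have "\<exists>!S. posdef_mat S \<and> S ** S = A" by metis
  from theI'[OF this] show ?thesis unfolding matsqrt_def .
qed

lemma norm_matsqrt_sq:
  assumes "posdef_mat (A::real^'n^'n)"
  shows "(norm (matsqrt A *v y))^2 = y \<bullet> (A *v y)"
proof -
  have p: "posdef_mat (matsqrt A)" and sq: "matsqrt A ** matsqrt A = A" using matsqrt_props[OF assms] by auto
  have t: "transpose (matsqrt A) = matsqrt A" using p unfolding posdef_mat_def by simp
  have "(norm (matsqrt A *v y))^2 = (matsqrt A *v y) \<bullet> (matsqrt A *v y)" by (simp add: dot_square_norm)
  also have "\<dots> = y \<bullet> (matsqrt A *v (matsqrt A *v y))" using sym_inner[OF t] by simp
  also have "\<dots> = y \<bullet> (A *v y)" by (simp add: matrix_vector_mul_assoc sq)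
  finally show ?thesis .
qed



definition Sm :: "real \<Rightarrow> real \<Rightarrow> real" where
  "Sm M t = M * arctan (t / M)"

definition Sd :: "real \<Rightarrow> real \<Rightarrow> real" where
  "Sd M t = 1 / (1 + (t / M)^2)"

lemma Sm_deriv:
  assumes "M > 0"
  shows "(Sm M has_real_derivative Sd M t) (at t)"
proof -
  have "((\<lambda>t. M * arctan (t / M)) has_real_derivative M * (inverse (1 + (t/M)^2) * (1 / M))) (at t)"
    using assms by (intro derivative_eq_intros DERIV_arctan) auto
  moreover have "M * (inverse (1 + (t/M)^2) * (1 / M)) = Sd M t"
    using assms unfolding Sd_def by (simp add: inverse_eq_divide)
  ultimately show ?thesis unfolding Sm_def by simp
qed

lemma Sd_pos: "0 < Sd M t" unfolding Sd_def by (simp add: add_pos_nonneg)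

lemma Sd_le1: "Sd M t \<le> 1" unfolding Sd_def by (simp add: divide_le_eq add_pos_nonneg)

lemma one_minus_Sd:
  assumes "M > 0"
  shows "1 - Sd M t \<le> min 1 (t^2 / M^2)"
proof -
  have d: "1 + (t/M)^2 > 0" by (simp add: add_pos_nonneg)
  have e: "1 - Sd M t = (t/M)^2 / (1 + (t/M)^2)" unfolding Sd_def using d by (simp add: field_simps)
  have "(t/M)^2 / (1 + (t/M)^2) \<le> (t/M)^2" using d by (simp add: divide_le_eq mult_le_cancel_left1)
  moreover have "(t/M)^2 / (1 + (t/M)^2) \<le> 1" using d by (simp add: divide_le_eq)
  ultimately show ?thesis using e by (simp add: power_divide)
qed

lemma Sm_lip:
  assumes "M > 0"
  shows "\<bar>Sm M a - Sm M b\<bar> \<le> \<bar>a - b\<bar>"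
proof -
  have *: "\<bar>Sm M y - Sm M x\<bar> \<le> \<bar>y - x\<bar>" if "x < y" for x y
  proof -
    have "\<exists>z>x. z < y \<and> Sm M y - Sm M x = (y - x) * Sd M z"
      by (rule MVT2[OF that]) (rule Sm_deriv[OF assms])
    then obtain z where "x < z" "z < y" "Sm M y - Sm M x = (y - x) * Sd M z" by blast
    thus ?thesis using Sd_pos[of M z] Sd_le1[of M z] that
      by (simp add: abs_mult mult_le_cancel_left1)
  qed
  consider "a < b" | "a = b" | "b < a" by linarith
  thus ?thesis
  proof cases
    case 1 thus ?thesis using *[OF 1] by (simp add: abs_minus_commute)
  next
    case 2 thus ?thesis by simp
  next
    case 3 thus ?thesis using *[OF 3] by simp
  qed
qed

lemma Sm_bound:
  assumes "M > 0"
  shows "\<bar>Sm M t\<bar> \<le> M * pi / 2"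
proof -
  have "\<bar>arctan (t / M)\<bar> \<le> pi / 2" using arctan_bounded[of "t/M"] by linarith
  thus ?thesis unfolding Sm_def using assms by (simp add: abs_mult)
qed

lemma Sm_zero_iff:
  assumes "M > 0"
  shows "Sm M t = 0 \<longleftrightarrow> t = 0"
  unfolding Sm_def using assms by simp

lemma Sm_inv:
  assumes "M > 0"
  shows "M * tan (Sm M t / M) = t"
  unfolding Sm_def using assms by (simp add: tan_arctan)

lemma Sm_diff_le:
  assumes "M > 0"
  shows "\<bar>Sm M t - t\<bar> \<le> \<bar>t\<bar>"
proof -
  have "\<bar>arctan (t / M)\<bar> \<le> \<bar>t / M\<bar>" by (rule abs_arctan_le)
  hence a: "\<bar>Sm M t\<bar> \<le> \<bar>t\<bar>" unfolding Sm_def using assms by (simp add: abs_mult field_simps)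
  have "0 \<le> t \<longleftrightarrow> 0 \<le> Sm M t" unfolding Sm_def using assms
    by (simp add: zero_le_mult_iff zero_le_divide_iff)
  thus ?thesis using a by linarith
qed

lemma Sm_lim: "(\<lambda>n. Sm (real (Suc n)) t) \<longlonglongrightarrow> t"
proof (cases "t = 0")
  case True thus ?thesis by (simp add: Sm_def)
next
  case False
  have "(arctan has_field_derivative inverse (1 + 0^2)) (at 0)" using DERIV_arctan[of 0] by simp
  hence d: "((\<lambda>y. arctan y / y) \<longlongrightarrow> 1) (at 0)"
    unfolding has_field_derivative_iff by simp
  have z: "filterlim (\<lambda>n. t / real (Suc n)) (at 0) sequentially"
  proof (rule filterlim_atI)
    show "((\<lambda>n. t / real (Suc n)) \<longlongrightarrow> 0) sequentially"
    proof (rule tendsto_divide_0[OF tendsto_const])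
      have "filterlim (\<lambda>n. real (Suc n)) at_top sequentially"
        using filterlim_real_sequentially filterlim_sequentially_Suc[of real at_top] by simp
      thus "filterlim (\<lambda>n. real (Suc n)) at_infinity sequentially"
        by (rule filterlim_at_top_imp_at_infinity)
    qed
    show "\<forall>\<^sub>F n in sequentially. t / real (Suc n) \<noteq> 0" using False by simp
  qed
  have "((\<lambda>n. t * (arctan (t / real (Suc n)) / (t / real (Suc n)))) \<longlongrightarrow> t * 1) sequentially"
    by (intro tendsto_mult tendsto_const tendsto_compose_filtermap[THEN iffD1] ; rule filterlim_compose[OF d z])
  moreover have "t * (arctan (t / real (Suc n)) / (t / real (Suc n))) = Sm (real (Suc n)) t" for n
    unfolding Sm_def using False by (simp add: field_simps)
  ultimately show ?thesis by simp
qed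

lemma fd_nondiff:
  assumes "\<not> f differentiable (at x)" "\<not> g differentiable (at x)"
  shows "frechet_derivative f (at x) = frechet_derivative g (at x)"
proof -
  have "(\<lambda>D. (f has_derivative D) (at x)) = (\<lambda>D. (g has_derivative D) (at x))"
    using assms unfolding differentiable_def by auto
  thus ?thesis unfolding frechet_derivative_def by simp
qed

lemma lgrad_Sm_diff:
  fixes \<phi> :: "real^'n \<Rightarrow> real"
  assumes M: "M > 0" and d: "\<phi> differentiable (at x)"
  shows "lgrad (\<lambda>y. Sm M (\<phi> y)) x = Sd M (\<phi> x) *\<^sub>R lgrad \<phi> x"
proof -
  define D where "D = frechet_derivative \<phi> (at x)"
  have dD: "(\<phi> has_derivative D) (at x)" using d unfolding D_def by (simp add: frechet_derivative_works)
  have sd: "(Sm M has_derivative (\<lambda>h. Sd M (\<phi> x) * h)) (at (\<phi> x))"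
    using Sm_deriv[OF M, of "\<phi> x"] unfolding has_field_derivative_def by simp
  have "((\<lambda>y. Sm M (\<phi> y)) has_derivative (\<lambda>h. Sd M (\<phi> x) * D h)) (at x)"
    by (rule has_derivative_compose[OF dD sd])
  hence "frechet_derivative (\<lambda>y. Sm M (\<phi> y)) (at x) = (\<lambda>h. Sd M (\<phi> x) * D h)"
    by (simp add: frechet_derivative_at[symmetric])
  thus ?thesis unfolding lgrad_def D_def by (simp add: vec_eq_iff)
qed

lemma lgrad_Sm_nondiff:
  fixes \<phi> :: "real^'n \<Rightarrow> real"
  assumes M: "M > 0" and nd: "\<not> \<phi> differentiable (at x)"
  shows "lgrad (\<lambda>y. Sm M (\<phi> y)) x = lgrad \<phi> x"
proof -
  have "\<not> (\<lambda>y. Sm M (\<phi> y)) differentiable (at x)"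
  proof
    assume "(\<lambda>y. Sm M (\<phi> y)) differentiable (at x)"
    then obtain E where E: "((\<lambda>y. Sm M (\<phi> y)) has_derivative E) (at x)" unfolding differentiable_def by blast
    define s where "s = Sm M (\<phi> x)"
    have c: "cos (s / M) \<noteq> 0" unfolding s_def Sm_def using M by simp
    have "((\<lambda>r. M * tan (r / M)) has_real_derivative M * (inverse ((cos (s / M))\<^sup>2) * (1 / M))) (at s)"
      using c M by (intro derivative_eq_intros DERIV_tan) auto
    hence td: "((\<lambda>r. M * tan (r / M)) has_derivative (\<lambda>h. (M * (inverse ((cos (s / M))\<^sup>2) * (1 / M))) * h)) (at s)"
      unfolding has_field_derivative_def by simp
    have "((\<lambda>y. M * tan (Sm M (\<phi> y) / M)) has_derivative (\<lambda>h. (M * (inverse ((cos (s / M))\<^sup>2) * (1 / M))) * E h)) (at x)"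
      using has_derivative_compose[OF E td[unfolded s_def]] unfolding s_def .
    moreover have "(\<lambda>y. M * tan (Sm M (\<phi> y) / M)) = \<phi>" using Sm_inv[OF M] by simp
    ultimately have "\<phi> differentiable (at x)" unfolding differentiable_def by auto
    thus False using nd by simp
  qed
  hence "frechet_derivative (\<lambda>y. Sm M (\<phi> y)) (at x) = frechet_derivative \<phi> (at x)"
    using fd_nondiff nd by blast
  thus ?thesis unfolding lgrad_def by simp
qed

lemma lip_deriv_bound:
  fixes f :: "real^'n \<Rightarrow> real"
  assumes L: "C-lipschitz_on UNIV f" and D: "(f has_derivative D) (at x)"
  shows "\<bar>D y\<bar> \<le> C * norm y"
proof -
  have lin: "linear D" using D by (simp add: has_derivative_linear)
  have "((\<lambda>t. x + t *\<^sub>R y) has_derivative (\<lambda>t. t *\<^sub>R y)) (at 0)"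
    by (intro derivative_eq_intros) auto
  from has_derivative_compose[OF this, of f D] D
  have "((\<lambda>t. f (x + t *\<^sub>R y)) has_derivative (\<lambda>t. D (t *\<^sub>R y))) (at 0)" by simp
  moreover have "(\<lambda>t. D (t *\<^sub>R y)) = (\<lambda>t. D y * t)" using lin by (simp add: linear_scale mult.commute)
  ultimately have "((\<lambda>t. f (x + t *\<^sub>R y)) has_field_derivative D y) (at 0)"
    unfolding has_field_derivative_def by simp
  hence lim: "((\<lambda>t. (f (x + t *\<^sub>R y) - f x) / t) \<longlongrightarrow> D y) (at 0)"
    unfolding has_field_derivative_iff by simp
  have C0: "C \<ge> 0" using L by (simp add: lipschitz_on_def)
  have "\<forall>\<^sub>F t in at 0. \<bar>(f (x + t *\<^sub>R y) - f x) / t\<bar> \<le> C * norm y"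
  proof (rule eventually_at_filter[THEN iffD2], rule always_eventually, intro allI impI)
    fix t :: real assume "t \<noteq> 0"
    have "\<bar>f (x + t *\<^sub>R y) - f x\<bar> \<le> C * dist (x + t *\<^sub>R y) x"
      using L unfolding lipschitz_on_def by (metis UNIV_I dist_real_def)
    also have "\<dots> = C * (\<bar>t\<bar> * norm y)" by (simp add: dist_norm)
    finally show "\<bar>(f (x + t *\<^sub>R y) - f x) / t\<bar> \<le> C * norm y"
      using \<open>t \<noteq> 0\<close> by (simp add: abs_divide divide_le_eq mult_ac)
  qed
  from tendsto_upperbound[OF tendsto_rabs[OF lim] this] show ?thesis by simp
qed

lemma lgrad_bounded:
  fixes \<phi> :: "real^'n \<Rightarrow> real"
  assumes L: "C-lipschitz_on UNIV \<phi>"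
  shows "\<exists>K. \<forall>x. norm (lgrad \<phi> x) \<le> K"
proof -
  define c0 :: "real^'n" where "c0 = (\<chi> i. (SOME D::real^'n \<Rightarrow> real. False) (axis i 1))"
  have "norm (lgrad \<phi> x) \<le> real CARD('n) * C + norm c0" for x
  proof (cases "\<phi> differentiable (at x)")
    case True
    hence D: "(\<phi> has_derivative frechet_derivative \<phi> (at x)) (at x)" by (simp add: frechet_derivative_works)
    have "norm (lgrad \<phi> x) \<le> (\<Sum>i\<in>UNIV. \<bar>lgrad \<phi> x $ i\<bar>)" by (rule norm_le_l1_cart)
    also have "\<dots> \<le> (\<Sum>i\<in>(UNIV::'n set). C)"
    proof (rule sum_mono)
      fix i :: 'n
      have "\<bar>frechet_derivative \<phi> (at x) (axis i 1)\<bar> \<le> C * norm (axis i (1::real))"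
        by (rule lip_deriv_bound[OF L D])
      thus "\<bar>lgrad \<phi> x $ i\<bar> \<le> C" unfolding lgrad_def by simp
    qed
    also have "\<dots> = real CARD('n) * C" by simp
    finally show ?thesis by (smt (verit) norm_ge_zero)
  next
    case False
    have "(\<lambda>D. (\<phi> has_derivative D) (at x)) = (\<lambda>D. False)"
      using False unfolding differentiable_def by auto
    hence "frechet_derivative \<phi> (at x) = (SOME D. False)" unfolding frechet_derivative_def by simp
    hence "lgrad \<phi> x = c0" unfolding lgrad_def c0_def by simp
    moreover have "C \<ge> 0" using L by (simp add: lipschitz_on_def)
    ultimately show ?thesis by simp
  qed
  thus ?thesis by blast
qed

lemma grad_pw:
  fixes \<phi> :: "real^'n \<Rightarrow> real" and A :: "real^'n^'n"
  assumes M: "M > 0"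
  shows "norm (A *v (lgrad (\<lambda>y. Sm M (\<phi> y)) x - gx))
     \<le> norm (A *v (lgrad \<phi> x - gx)) + (1 - Sd M (\<phi> x)) * norm (A *v gx)"
proof (cases "\<phi> differentiable (at x)")
  case True
  define s where "s = Sd M (\<phi> x)"
  have s0: "0 \<le> s" "s \<le> 1" unfolding s_def using Sd_pos[of M "\<phi> x"] Sd_le1[of M "\<phi> x"] by auto
  have "lgrad (\<lambda>y. Sm M (\<phi> y)) x - gx = s *\<^sub>R (lgrad \<phi> x - gx) - (1 - s) *\<^sub>R gx"
    using lgrad_Sm_diff[OF M True] unfolding s_def by (simp add: algebra_simps)
  hence "A *v (lgrad (\<lambda>y. Sm M (\<phi> y)) x - gx) = s *\<^sub>R (A *v (lgrad \<phi> x - gx)) - (1 - s) *\<^sub>R (A *v gx)"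
    by (simp add: matrix_vector_mult_diff_distrib matrix_vector_mult_scaleR)
  hence "norm (A *v (lgrad (\<lambda>y. Sm M (\<phi> y)) x - gx)) \<le> s * norm (A *v (lgrad \<phi> x - gx)) + (1 - s) * norm (A *v gx)"
    using s0 by (metis (no_types, lifting) abs_of_nonneg diff_ge_0_iff_ge norm_scaleR norm_triangle_ineq4 order_trans order_refl)
  also have "\<dots> \<le> norm (A *v (lgrad \<phi> x - gx)) + (1 - s) * norm (A *v gx)"
    using s0 by (simp add: mult_left_le_one_le)
  finally show ?thesis unfolding s_def .
next
  case False
  have "0 \<le> (1 - Sd M (\<phi> x)) * norm (A *v gx)" using Sd_le1 by simp
  thus ?thesis using lgrad_Sm_nondiff[OF M False] by simp
qed

lemma lipc_Sm:
  assumes M: "M > 0" and l: "lipc \<Omega> \<phi>"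
  shows "lipc \<Omega> (\<lambda>y. Sm M (\<phi> y))"
proof -
  obtain C where C: "C-lipschitz_on UNIV \<phi>" using l unfolding lipc_def by blast
  have "C-lipschitz_on UNIV (\<lambda>y. Sm M (\<phi> y))"
    unfolding lipschitz_on_def
  proof (intro conjI ballI)
    show "0 \<le> C" using C by (simp add: lipschitz_on_def)
    fix x y :: "real^'a"
    have "dist (Sm M (\<phi> x)) (Sm M (\<phi> y)) \<le> dist (\<phi> x) (\<phi> y)"
      using Sm_lip[OF M] by (simp add: dist_real_def)
    also have "\<dots> \<le> C * dist x y" using C unfolding lipschitz_on_def by auto
    finally show "dist (Sm M (\<phi> x)) (Sm M (\<phi> y)) \<le> C * dist x y" .
  qed
  moreover have "{x. Sm M (\<phi> x) \<noteq> 0} = {x. \<phi> x \<noteq> 0}" using Sm_zero_iff[OF M] by auto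
  ultimately show ?thesis using l unfolding lipc_def by auto
qed



lemma nn_integral_add_le:
  assumes B: "B \<in> borel_measurable M"
  shows "(\<integral>\<^sup>+x. A x + B x \<partial>M) \<le> (\<integral>\<^sup>+x. A x \<partial>M) + (\<integral>\<^sup>+x. B x \<partial>M)"
proof -
  have "integral\<^sup>S M s \<le> (\<integral>\<^sup>+x. A x \<partial>M) + (\<integral>\<^sup>+x. B x \<partial>M)"
    if s: "simple_function M s" "s \<le> (\<lambda>x. A x + B x)" "\<forall>x. s x < top" for s
  proof -
    have sm: "s \<in> borel_measurable M" using s(1) by (rule borel_measurable_simple_function)
    have "integral\<^sup>S M s = (\<integral>\<^sup>+x. s x \<partial>M)" using s(1) by (simp add: nn_integral_eq_simple_integral)
    also have "\<dots> \<le> (\<integral>\<^sup>+x. (s x - B x) + B x \<partial>M)"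
      by (rule nn_integral_mono) (simp only: diff_add_self_ennreal, auto simp: not_le intro: less_imp_le)
    also have "\<dots> = (\<integral>\<^sup>+x. s x - B x \<partial>M) + (\<integral>\<^sup>+x. B x \<partial>M)"
      using sm B by (intro nn_integral_add borel_measurable_minus_ennreal)
    also have "(\<integral>\<^sup>+x. s x - B x \<partial>M) \<le> (\<integral>\<^sup>+x. A x \<partial>M)"
    proof (rule nn_integral_mono)
      fix x
      have "s x \<le> B x + A x" using s(2) by (simp add: le_fun_def add.commute)
      thus "s x - B x \<le> A x" using s(3)[rule_format, of x] unfolding ennreal_minus_le_iff by auto
    qed
    finally show ?thesis by (simp add: add_right_mono)
  qed
  thus ?thesis unfolding nn_integral_def_finite[of M "\<lambda>x. A x + B x"] by (intro SUP_least) blast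
qed

lemma ennreal_r_inv: "r > 0 \<Longrightarrow> ennreal r * ennreal (1 / r) = 1"
  by (simp add: ennreal_mult[symmetric])

lemma nn_integral_cmult_le:
  assumes r: "r > 0"
  shows "(\<integral>\<^sup>+x. ennreal r * A x \<partial>M) \<le> ennreal r * (\<integral>\<^sup>+x. A x \<partial>M)"
proof -
  have "integral\<^sup>S M s \<le> ennreal r * (\<integral>\<^sup>+x. A x \<partial>M)"
    if s: "simple_function M s" "s \<le> (\<lambda>x. ennreal r * A x)" for s
  proof -
    define s' where "s' x = s x * ennreal (1 / r)" for x
    have s's: "simple_function M s'" unfolding s'_def using s(1) by (rule simple_function_compose1)
    have ss: "s x = ennreal r * s' x" for x
      unfolding s'_def by (metis (lifting) mult.comm_neutral mult.left_commute ennreal_r_inv[OF r])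
    have le: "s' x \<le> A x" for x
    proof -
      have "s' x \<le> ennreal r * A x * ennreal (1 / r)" unfolding s'_def using s(2)
        by (metis le_funE mult_right_mono zero_le)
      also have "\<dots> = A x" by (metis ab_semigroup_mult_class.mult_ac(1) mult.commute mult.right_neutral ennreal_r_inv[OF r])
      finally show ?thesis .
    qed
    have "s = (\<lambda>x. ennreal r * s' x)" using ss by (rule ext)
    hence "integral\<^sup>S M s = ennreal r * integral\<^sup>S M s'"
      using simple_integral_mult[OF s's, of "ennreal r"] by simp
    also have "integral\<^sup>S M s' = (\<integral>\<^sup>+x. s' x \<partial>M)" using s's by (simp add: nn_integral_eq_simple_integral)
    also have "\<dots> \<le> (\<integral>\<^sup>+x. A x \<partial>M)" using le by (simp add: nn_integral_mono)
    finally show ?thesis by (metis mult_left_mono zero_le)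
  qed
  thus ?thesis unfolding nn_integral_def[of M "\<lambda>x. ennreal r * A x"] by (intro SUP_least) blast
qed



lemma vec_nth_meas[measurable (raw)]:
  fixes f :: "'a \<Rightarrow> 'b::real_normed_vector^'n"
  shows "f \<in> borel_measurable M \<Longrightarrow> (\<lambda>x. f x $ i) \<in> borel_measurable M"
  by (erule measurable_compose) (intro borel_measurable_continuous_onI linear_continuous_on bounded_linear_vec_nth)

lemma Sm_cont: "continuous_on UNIV (Sm c)"
proof (cases "c = 0")
  case True
  hence "Sm c = (\<lambda>_. 0)" by (simp add: Sm_def fun_eq_iff)
  thus ?thesis by simp
next
  case False
  show ?thesis unfolding Sm_def using False by (intro continuous_intros) auto
qed

lemma Sm_meas[measurable (raw)]:
  "f \<in> borel_measurable M \<Longrightarrow> (\<lambda>x. Sm c (f x)) \<in> borel_measurable M"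
  by (erule measurable_compose) (rule borel_measurable_continuous_onI[OF Sm_cont])

lemma quadform_meas[measurable (raw)]:
  fixes Q :: "'a \<Rightarrow> real^'n^'n" and g :: "'a \<Rightarrow> real^'n"
  assumes [measurable]: "Q \<in> borel_measurable M" "g \<in> borel_measurable M"
  shows "(\<lambda>x. g x \<bullet> (Q x *v g x)) \<in> borel_measurable M"
  unfolding inner_vec_def matrix_vector_mult_def vec_lambda_beta
  by measurable

lemma norm_mv_le: "norm ((A::real^'n^'n) *v y) \<le> mat_opnorm A * norm y"
  unfolding mat_opnorm_def by (rule onorm) (rule matrix_vector_mul_bounded_linear)

lemma dom_conv0:
  fixes f :: "nat \<Rightarrow> 'a \<Rightarrow> real"
  assumes [measurable]: "\<And>n. f n \<in> borel_measurable M" "w \<in> borel_measurable M"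
    and bnd: "\<And>n. AE x in M. 0 \<le> f n x \<and> f n x \<le> w x"
    and wfin: "(\<integral>\<^sup>+x. ennreal (w x) \<partial>M) < \<infinity>"
    and lim: "AE x in M. (\<lambda>n. f n x) \<longlonglongrightarrow> 0"
  shows "(\<lambda>n. \<integral>\<^sup>+x. ennreal (f n x) \<partial>M) \<longlonglongrightarrow> 0"
proof -
  have "(\<lambda>n. \<integral>\<^sup>+x. ennreal (f n x) \<partial>M) \<longlonglongrightarrow> (\<integral>\<^sup>+x. ennreal 0 \<partial>M)"
  proof (rule nn_integral_dominated_convergence[where w="\<lambda>x. ennreal (w x)"])
    show "\<And>j. AE x in M. ennreal (f j x) \<le> ennreal (w x)"
      using bnd by (rule AE_mp) (auto intro!: AE_I2 ennreal_leI)
    show "AE x in M. (\<lambda>i. ennreal (f i x)) \<longlonglongrightarrow> ennreal 0"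
      using lim by (rule AE_mp) (auto intro!: AE_I2 dest: tendsto_ennrealI)
  qed (use wfin in auto)
  thus ?thesis by simp
qed

lemma lipc_bounded:
  assumes "lipc \<Omega> \<phi>"
  shows "\<exists>B. \<forall>x. \<bar>\<phi> x\<bar> \<le> B"
proof -
  obtain C where C: "C-lipschitz_on UNIV \<phi>" and K: "compact (closure {x. \<phi> x \<noteq> 0})"
    using assms unfolding lipc_def by blast
  have "continuous_on UNIV \<phi>" using C by (rule lipschitz_on_continuous_on)
  hence "compact (\<phi> ` closure {x. \<phi> x \<noteq> 0})"
    using K by (metis compact_continuous_image continuous_on_subset subset_UNIV)
  then obtain B where B: "\<And>y. y \<in> \<phi> ` closure {x. \<phi> x \<noteq> 0} \<Longrightarrow> norm y \<le> B"
    using compact_imp_bounded bounded_iff by metis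
  have "\<bar>\<phi> x\<bar> \<le> max B 0" for x
  proof (cases "\<phi> x = 0")
    case False
    hence "x \<in> closure {x. \<phi> x \<noteq> 0}" by (simp add: closure_def)
    thus ?thesis using B[of "\<phi> x"] by auto
  qed simp
  thus ?thesis by blast
qed

lemma lipc_cont: "lipc \<Omega> \<phi> \<Longrightarrow> continuous_on UNIV \<phi>"
  unfolding lipc_def using lipschitz_on_continuous_on by blast

lemma powr_sum2:
  fixes a b p :: real
  assumes "0 \<le> a" "0 \<le> b" "0 < p"
  shows "(a + b) powr p \<le> 2 powr p * (a powr p + b powr p)"
proof -
  have "(a + b) powr p \<le> (2 * max a b) powr p" using assms by (intro powr_mono2) auto
  also have "\<dots> = 2 powr p * max a b powr p" using assms by (simp add: powr_mult)
  also have "max a b powr p \<le> a powr p + b powr p" by (simp add: max_def)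
  hence "2 powr p * max a b powr p \<le> 2 powr p * (a powr p + b powr p)" by (simp add: mult_left_mono)
  finally show ?thesis .
qed

lemma powr_sum3:
  fixes a b c p :: real
  assumes "0 \<le> a" "0 \<le> b" "0 \<le> c" "0 < p"
  shows "(a + b + c) powr p \<le> 3 powr p * (a powr p + b powr p + c powr p)"
proof -
  have "(a + b + c) powr p \<le> (3 * max a (max b c)) powr p" using assms by (intro powr_mono2) auto
  also have "\<dots> = 3 powr p * max a (max b c) powr p" using assms by (simp add: powr_mult)
  also have "max a (max b c) powr p \<le> a powr p + b powr p + c powr p" by (simp add: max_def)
  hence "3 powr p * max a (max b c) powr p \<le> 3 powr p * (a powr p + b powr p + c powr p)" by (simp add: mult_left_mono)
  finally show ?thesis .
qed

lemma sq_split: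
  fixes z K W \<delta> p :: real
  assumes "0 \<le> z" "z \<le> K" "z \<le> W" "0 < \<delta>" "0 < p"
  shows "z^2 \<le> \<delta>^2 + K^2 / \<delta> powr p * W powr p"
proof (cases "z \<le> \<delta>")
  case True
  hence "z^2 \<le> \<delta>^2" using assms by (intro power_mono) auto
  moreover have "0 \<le> K^2 / \<delta> powr p * W powr p" by simp
  ultimately show ?thesis by linarith
next
  case False
  hence "\<delta> powr p \<le> W powr p" using assms by (intro powr_mono2) auto
  hence "1 \<le> W powr p / \<delta> powr p" using assms by simp
  hence "K^2 * 1 \<le> K^2 * (W powr p / \<delta> powr p)" by (intro mult_left_mono) auto
  moreover have "z^2 \<le> K^2" using assms by (intro power_mono) auto
  ultimately show ?thesis by (simp add: add_increasing)
qed

lemma min_sq_le: "min 1 (2 * w^2) \<le> 2 * \<bar>w::real\<bar>"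
proof (cases "\<bar>w\<bar> \<le> 1/2")
  case True
  have "2 * w^2 = 2 * \<bar>w\<bar> * \<bar>w\<bar>" by (simp add: power2_eq_square)
  also have "\<dots> \<le> 2 * \<bar>w\<bar> * 1" using True by (intro mult_left_mono) auto
  finally show ?thesis by linarith
next
  case False
  thus ?thesis using min.cobounded1[of 1 "2*w^2"] by linarith
qed

lemma abs_powr2: "\<bar>x::real\<bar> powr 2 = x^2"
  by (cases "x = 0") (simp_all add: powr_numeral)

lemma min_add_le: "0 \<le> x \<Longrightarrow> 0 \<le> y \<Longrightarrow> min 1 (x + y) \<le> min 1 x + min (1::real) y"
  by (simp add: min_def)

lemma min_split:
  fixes w a M :: real
  assumes M: "1 \<le> M"
  shows "min 1 ((w + a)^2 / M^2) \<le> min 1 (2 * w^2) + min 1 (2 * a^2 / M^2)"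
proof -
  have M2: "1 \<le> M^2" using M by (simp add: one_le_power)
  have e: "2 * w^2 + 2 * a^2 - (w + a)^2 = (w - a)^2" by (simp add: power2_eq_square algebra_simps)
  have "(w + a)^2 \<le> 2 * w^2 + 2 * a^2" using e zero_le_power2[of "w - a"] by linarith
  hence "(w + a)^2 / M^2 \<le> (2 * w^2 + 2 * a^2) / M^2" using M2 by (simp add: divide_right_mono)
  also have "\<dots> = 2 * w^2 / M^2 + 2 * a^2 / M^2" by (simp add: add_divide_distrib)
  also have "2 * w^2 / M^2 \<le> 2 * w^2" using M2 by (simp add: divide_le_eq mult_le_cancel_left1)
  finally have "(w + a)^2 / M^2 \<le> 2 * w^2 + 2 * a^2 / M^2" by simp
  hence "min 1 ((w + a)^2 / M^2) \<le> min 1 (2 * w^2 + 2 * a^2 / M^2)" by simp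
  also have "\<dots> \<le> min 1 (2 * w^2) + min 1 (2 * a^2 / M^2)" by (rule min_add_le) auto
  finally show ?thesis .
qed

lemma grad_pt:
  fixes \<phi> :: "real^'n \<Rightarrow> real" and A :: "real^'n^'n"
  assumes M: "1 \<le> M"
  shows "norm (A *v (lgrad (\<lambda>y. Sm M (\<phi> y)) x - gx)) \<le> norm (A *v (lgrad \<phi> x - gx))
     + min 1 (2 * (\<phi> x - ux)^2) * norm (A *v gx) + min 1 (2 * ux^2 / M^2) * norm (A *v gx)"
proof -
  have "norm (A *v (lgrad (\<lambda>y. Sm M (\<phi> y)) x - gx)) \<le> norm (A *v (lgrad \<phi> x - gx)) + (1 - Sd M (\<phi> x)) * norm (A *v gx)"
    using M by (intro grad_pw) auto
  also have "1 - Sd M (\<phi> x) \<le> min 1 (2 * (\<phi> x - ux)^2) + min 1 (2 * ux^2 / M^2)"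
  proof -
    have "1 - Sd M (\<phi> x) \<le> min 1 ((\<phi> x)^2 / M^2)" using M by (intro one_minus_Sd) auto
    also have "\<dots> = min 1 (((\<phi> x - ux) + ux)^2 / M^2)" by simp
    also have "\<dots> \<le> min 1 (2 * (\<phi> x - ux)^2) + min 1 (2 * ux^2 / M^2)" by (rule min_split[OF M])
    finally show ?thesis .
  qed
  hence "(1 - Sd M (\<phi> x)) * norm (A *v gx) \<le> (min 1 (2 * (\<phi> x - ux)^2) + min 1 (2 * ux^2 / M^2)) * norm (A *v gx)"
    by (rule mult_right_mono) simp
  finally show ?thesis by (simp add: distrib_right add.assoc)
qed

lemma grad_pt_p:
  fixes \<phi> :: "real^'n \<Rightarrow> real" and A :: "real^'n^'n"
  assumes M: "1 \<le> M" and p: "0 < p" and H: "norm (A *v gx) powr p = H" and R: "0 \<le> R" and v0: "0 \<le> v0"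
  shows "norm (A *v (lgrad (\<lambda>y. Sm M (\<phi> y)) x - gx)) powr p \<le> 3 powr p * norm (A *v (lgrad \<phi> x - gx)) powr p
     + 3 powr p * (R * 2 powr p * (\<bar>\<phi> x - ux\<bar> powr p * v0) + (if H > R * v0 then H else 0)
        + min 1 (2 * ux^2 / M^2) powr p * H)"
proof -
  define X where "X = norm (A *v (lgrad \<phi> x - gx))"
  define Y where "Y = norm (A *v gx)"
  define m1 where "m1 = min 1 (2 * (\<phi> x - ux)^2)"
  define m2 where "m2 = min 1 (2 * ux^2 / M^2)"
  have m0: "0 \<le> m1" "0 \<le> m2" "m1 \<le> 1" unfolding m1_def m2_def by auto
  have H0: "0 \<le> H" using H[symmetric] by simp
  have s1: "norm (A *v (lgrad (\<lambda>y. Sm M (\<phi> y)) x - gx)) powr p \<le> (X + m1 * Y + m2 * Y) powr p"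
    unfolding X_def Y_def m1_def m2_def using p by (intro powr_mono2 grad_pt[OF M]) auto
  have s2: "(X + m1 * Y + m2 * Y) powr p \<le> 3 powr p * (X powr p + (m1 * Y) powr p + (m2 * Y) powr p)"
    using p m0 by (intro powr_sum3) (auto simp: X_def Y_def)
  have s3: "(m1 * Y) powr p = m1 powr p * H" using m0 H by (simp add: Y_def powr_mult)
  have s4: "(m2 * Y) powr p = m2 powr p * H" using m0 H by (simp add: Y_def powr_mult)
  have s5: "m1 powr p * H \<le> R * 2 powr p * (\<bar>\<phi> x - ux\<bar> powr p * v0) + (if H > R * v0 then H else 0)"
  proof (cases "H > R * v0")
    case True
    have "m1 powr p \<le> 1 powr p" using m0 p by (intro powr_mono2) auto
    hence "m1 powr p * H \<le> H" using H0 by (simp add: mult_left_le_one_le)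
    moreover have "0 \<le> R * 2 powr p * (\<bar>\<phi> x - ux\<bar> powr p * v0)" using R v0 by simp
    ultimately show ?thesis using True by simp
  next
    case False
    have "m1 powr p \<le> (2 * \<bar>\<phi> x - ux\<bar>) powr p" using m0 p min_sq_le[of "\<phi> x - ux"]
      unfolding m1_def by (intro powr_mono2) auto
    also have "\<dots> = 2 powr p * \<bar>\<phi> x - ux\<bar> powr p" by (simp add: powr_mult)
    finally have "m1 powr p * H \<le> 2 powr p * \<bar>\<phi> x - ux\<bar> powr p * (R * v0)"
      using H0 False by (intro mult_mono) auto
    moreover have "2 powr p * \<bar>\<phi> x - ux\<bar> powr p * (R * v0) = R * 2 powr p * (\<bar>\<phi> x - ux\<bar> powr p * v0)"
      by (simp add: mult_ac)
    ultimately show ?thesis using False by simp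
  qed
  have "3 powr p * (X powr p + (m1 * Y) powr p + (m2 * Y) powr p)
     \<le> 3 powr p * (X powr p + (R * 2 powr p * (\<bar>\<phi> x - ux\<bar> powr p * v0) + (if H > R * v0 then H else 0)) + m2 powr p * H)"
    unfolding s3 s4 using s5 by (intro mult_left_mono add_mono) auto
  also have "\<dots> = 3 powr p * X powr p + 3 powr p * (R * 2 powr p * (\<bar>\<phi> x - ux\<bar> powr p * v0) + (if H > R * v0 then H else 0)
        + m2 powr p * H)" by (simp add: distrib_left add.assoc)
  finally show ?thesis using s1 s2 unfolding X_def m2_def by linarith
qed

lemma enn_comb3:
  fixes X A B C :: ennreal
  assumes "X \<le> ennreal c1 * A + ennreal c2 * B + ennreal c3 * C"
    and "A \<le> ennreal a" "B \<le> ennreal b" "C \<le> ennreal c"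
    and "0 \<le> c1" "0 \<le> c2" "0 \<le> c3" "0 \<le> a" "0 \<le> b" "0 \<le> c"
  shows "X \<le> ennreal (c1 * a + c2 * b + c3 * c)"
proof -
  have "ennreal c1 * A + ennreal c2 * B + ennreal c3 * C \<le> ennreal c1 * ennreal a + ennreal c2 * ennreal b + ennreal c3 * ennreal c"
    by (intro add_mono mult_left_mono assms(2-4)) simp_all
  also have "ennreal c1 * ennreal a = ennreal (c1 * a)" using assms(5,8) by (rule ennreal_mult[symmetric])
  also have "ennreal c2 * ennreal b = ennreal (c2 * b)" using assms(6,9) by (rule ennreal_mult[symmetric])
  also have "ennreal c3 * ennreal c = ennreal (c3 * c)" using assms(7,10) by (rule ennreal_mult[symmetric])
  also have "ennreal (c1 * a) + ennreal (c2 * b) = ennreal (c1 * a + c2 * b)"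
    using assms(5-) by (intro ennreal_plus[symmetric]) auto
  also have "ennreal (c1 * a + c2 * b) + ennreal (c3 * c) = ennreal (c1 * a + c2 * b + c3 * c)"
    using assms(5-) by (intro ennreal_plus[symmetric]) auto
  finally show ?thesis using assms(1) by (rule order_trans[rotated])
qed

lemma enn_add_le:
  assumes "X \<le> ennreal a" "Y \<le> ennreal b" "0 \<le> a" "0 \<le> b" "a + b \<le> e"
  shows "X + Y \<le> ennreal e"
proof -
  have "X + Y \<le> ennreal a + ennreal b" using assms(1,2) by (rule add_mono)
  also have "\<dots> = ennreal (a + b)" using assms(3,4) by (rule ennreal_plus[symmetric])
  also have "\<dots> \<le> ennreal e" using assms(5) by (rule ennreal_leI)
  finally show ?thesis .
qed

context
  fixes \<Omega> :: "(real^'n) set" and p :: real and Q :: "real^'n \<Rightarrow> real^'n^'n" and v :: "real^'n \<Rightarrow> real"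
  assumes \<Omega>o: "open \<Omega>" and p1: "1 < p" and H: "hypH p Q v \<Omega>"
begin

abbreviation "\<mu> \<equiv> lebesgue_on \<Omega>"

lemma \<Omega>sets: "\<Omega> \<in> sets lebesgue" using \<Omega>o by simp

lemma setint: "(\<integral>\<^sup>+x\<in>\<Omega>. f x \<partial>lebesgue) = (\<integral>\<^sup>+x. f x \<partial>\<mu>)"
  by (rule nn_integral_restrict_space[symmetric]) (simp add: \<Omega>sets)

lemma sp[simp]: "space \<mu> = \<Omega>" by (simp add: \<Omega>sets)

lemma Qm[measurable]: "Q \<in> borel_measurable \<mu>" using H unfolding hypH_def by blast
lemma vm[measurable]: "v \<in> borel_measurable \<mu>" using H unfolding hypH_def by blast
lemma Qpd: "AE x in \<mu>. posdef_mat (Q x)" using H unfolding hypH_def by blast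
lemma v0: "x \<in> \<Omega> \<Longrightarrow> 0 \<le> v x" using H unfolding hypH_def by blast
lemma vbd: "AE x in \<mu>. mat_opnorm (matsqrt (Q x)) powr p \<le> v x" using H unfolding hypH_def by blast

lemma vfin: "(\<integral>\<^sup>+x. ennreal (v x) \<partial>\<mu>) < \<infinity>"
proof -
  have "set_integrable lebesgue \<Omega> v" using H unfolding hypH_def by blast
  hence "integrable \<mu> v" unfolding set_integrable_def
    by (subst integrable_restrict_space) (simp_all add: \<Omega>sets)
  hence "(\<integral>\<^sup>+x. ennreal (norm (v x)) \<partial>\<mu>) < \<infinity>" by (simp add: integrable_iff_bounded)
  moreover have "(\<integral>\<^sup>+x. ennreal (norm (v x)) \<partial>\<mu>) = (\<integral>\<^sup>+x. ennreal (v x) \<partial>\<mu>)"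
    by (rule nn_integral_cong) (simp add: v0)
  ultimately show ?thesis by simp
qed

lemma p0: "0 < p" using p1 by simp

lemma sqrtQ_bound:
  "AE x in \<mu>. \<forall>y. norm (matsqrt (Q x) *v y) powr p \<le> v x * norm y powr p"
  using vbd
proof (rule AE_mp, intro AE_I2 impI allI)
  fix x y assume b: "mat_opnorm (matsqrt (Q x)) powr p \<le> v x"
  have "norm (matsqrt (Q x) *v y) powr p \<le> (mat_opnorm (matsqrt (Q x)) * norm y) powr p"
    by (intro powr_mono2 norm_mv_le) (use p0 in auto)
  also have "\<dots> = mat_opnorm (matsqrt (Q x)) powr p * norm y powr p"
  proof -
    have "0 \<le> mat_opnorm (matsqrt (Q x))" unfolding mat_opnorm_def
      by (rule onorm_pos_le) (rule matrix_vector_mul_bounded_linear)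
    thus ?thesis by (simp add: powr_mult)
  qed
  also have "\<dots> \<le> v x * norm y powr p" using b by (simp add: mult_right_mono)
  finally show "norm (matsqrt (Q x) *v y) powr p \<le> v x * norm y powr p" .
qed


lemma int_le_lin3:
  fixes F f1 f2 f3 :: "real^'n \<Rightarrow> real"
  assumes [measurable]: "f1 \<in> borel_measurable \<mu>" "f2 \<in> borel_measurable \<mu>" "f3 \<in> borel_measurable \<mu>"
    and nn: "\<And>x. x \<in> \<Omega> \<Longrightarrow> 0 \<le> f1 x \<and> 0 \<le> f2 x \<and> 0 \<le> f3 x"
    and c: "0 \<le> c1" "0 \<le> c2" "0 \<le> c3"
    and le: "AE x in \<mu>. F x \<le> c1 * f1 x + c2 * f2 x + c3 * f3 x"
  shows "(\<integral>\<^sup>+x. ennreal (F x) \<partial>\<mu>) \<le> ennreal c1 * (\<integral>\<^sup>+x. ennreal (f1 x) \<partial>\<mu>)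
     + ennreal c2 * (\<integral>\<^sup>+x. ennreal (f2 x) \<partial>\<mu>) + ennreal c3 * (\<integral>\<^sup>+x. ennreal (f3 x) \<partial>\<mu>)"
proof -
  have "(\<integral>\<^sup>+x. ennreal (F x) \<partial>\<mu>) \<le> (\<integral>\<^sup>+x. ennreal c1 * ennreal (f1 x) + ennreal c2 * ennreal (f2 x) + ennreal c3 * ennreal (f3 x) \<partial>\<mu>)"
  proof (rule nn_integral_mono_AE)
    show "AE x in \<mu>. ennreal (F x) \<le> ennreal c1 * ennreal (f1 x) + ennreal c2 * ennreal (f2 x) + ennreal c3 * ennreal (f3 x)"
      using le
    proof (rule AE_mp, intro AE_I2 impI)
      fix x assume x: "x \<in> space \<mu>" and l: "F x \<le> c1 * f1 x + c2 * f2 x + c3 * f3 x"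
      have n: "0 \<le> f1 x" "0 \<le> f2 x" "0 \<le> f3 x" using nn x by auto
      have "ennreal (F x) \<le> ennreal (c1 * f1 x + c2 * f2 x + c3 * f3 x)" using l by (rule ennreal_leI)
      also have "\<dots> = ennreal c1 * ennreal (f1 x) + ennreal c2 * ennreal (f2 x) + ennreal c3 * ennreal (f3 x)"
        using n c by (simp add: ennreal_plus ennreal_mult)
      finally show "ennreal (F x) \<le> ennreal c1 * ennreal (f1 x) + ennreal c2 * ennreal (f2 x) + ennreal c3 * ennreal (f3 x)" .
    qed
  qed
  also have "\<dots> = ennreal c1 * (\<integral>\<^sup>+x. ennreal (f1 x) \<partial>\<mu>)
     + ennreal c2 * (\<integral>\<^sup>+x. ennreal (f2 x) \<partial>\<mu>) + ennreal c3 * (\<integral>\<^sup>+x. ennreal (f3 x) \<partial>\<mu>)"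
    by (simp add: nn_integral_add nn_integral_cmult)
  finally show ?thesis .
qed

context
  fixes u :: "real^'n \<Rightarrow> real" and g :: "real^'n \<Rightarrow> real^'n" and \<phi> :: "nat \<Rightarrow> real^'n \<Rightarrow> real"
  assumes up: "Lw_mem p v \<Omega> u" and u2: "Lw_mem 2 v \<Omega> u" and gQ: "LQ_mem p Q \<Omega> g"
    and \<phi>l: "\<And>k. lipc \<Omega> (\<phi> k)"
    and \<phi>lim: "(\<lambda>k. H_norm p Q v \<Omega> (\<lambda>x. \<phi> k x - u x) (\<lambda>x. lgrad (\<phi> k) x - g x)) \<longlonglongrightarrow> 0"
begin

lemma um[measurable]: "u \<in> borel_measurable \<mu>" using up unfolding Lw_mem_def by blast
lemma gm[measurable]: "g \<in> borel_measurable \<mu>" using gQ unfolding LQ_mem_def by blast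
lemma ufinp: "(\<integral>\<^sup>+x. ennreal (\<bar>u x\<bar> powr p * v x) \<partial>\<mu>) < \<infinity>" using up unfolding Lw_mem_def setint by blast
lemma ufin2: "(\<integral>\<^sup>+x. ennreal (\<bar>u x\<bar> powr 2 * v x) \<partial>\<mu>) < \<infinity>" using u2 unfolding Lw_mem_def setint by blast
lemma gfin: "(\<integral>\<^sup>+x. ennreal (norm (matsqrt (Q x) *v g x) powr p) \<partial>\<mu>) < \<infinity>"
  using gQ unfolding LQ_mem_def setint by blast
lemma \<phi>m[measurable]: "\<phi> k \<in> borel_measurable \<mu>"
  by (rule continuous_imp_measurable_on_sets_lebesgue[OF _ \<Omega>sets])
     (metis lipc_cont[OF \<phi>l] continuous_on_subset subset_UNIV)

definition hh :: "real^'n \<Rightarrow> real" where "hh x = sqrt (g x \<bullet> (Q x *v g x)) powr p"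

lemma hm[measurable]: "hh \<in> borel_measurable \<mu>" unfolding hh_def by measurable

lemma h0: "0 \<le> hh x" unfolding hh_def by simp

lemma h_eq: "AE x in \<mu>. norm (matsqrt (Q x) *v g x) powr p = hh x"
  using Qpd
proof (rule AE_mp, intro AE_I2 impI)
  fix x assume "posdef_mat (Q x)"
  from norm_matsqrt_sq[OF this, of "g x"]
  have "norm (matsqrt (Q x) *v g x) = sqrt (g x \<bullet> (Q x *v g x))" by (metis norm_ge_zero real_sqrt_unique)
  thus "norm (matsqrt (Q x) *v g x) powr p = hh x" unfolding hh_def by simp
qed

lemma hfin: "(\<integral>\<^sup>+x. ennreal (hh x) \<partial>\<mu>) < \<infinity>"
proof -
  have "(\<integral>\<^sup>+x. ennreal (hh x) \<partial>\<mu>) = (\<integral>\<^sup>+x. ennreal (norm (matsqrt (Q x) *v g x) powr p) \<partial>\<mu>)"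
    using h_eq by (intro nn_integral_cong_AE) (auto elim!: AE_mp)
  thus ?thesis using gfin by simp
qed

lemma h_le: "AE x in \<mu>. hh x \<le> v x * norm (g x) powr p"
  using h_eq sqrtQ_bound by eventually_elim metis



definition aa :: "nat \<Rightarrow> ennreal" where
  "aa k = (\<integral>\<^sup>+x. ennreal (\<bar>\<phi> k x - u x\<bar> powr p * v x) \<partial>\<mu>)"
definition bb :: "nat \<Rightarrow> ennreal" where
  "bb k = (\<integral>\<^sup>+x. ennreal (norm (matsqrt (Q x) *v (lgrad (\<phi> k) x - g x)) powr p) \<partial>\<mu>)"

lemma upm[measurable]: "(\<lambda>x. \<bar>u x\<bar> powr p * v x) \<in> borel_measurable \<mu>" by measurable

lemma aa_fin: "aa k < \<infinity>"
proof -
  obtain B0 where B0: "\<And>x. \<bar>\<phi> k x\<bar> \<le> B0" using lipc_bounded[OF \<phi>l[of k]] by blast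
  define B where "B = max B0 0"
  have B: "\<And>x. \<bar>\<phi> k x\<bar> \<le> B" "0 \<le> B" unfolding B_def using B0 by (auto intro: le_max_iff_disj[THEN iffD2])
  have "aa k \<le> ennreal (2 powr p * B powr p) * (\<integral>\<^sup>+x. ennreal (v x) \<partial>\<mu>)
     + ennreal (2 powr p) * (\<integral>\<^sup>+x. ennreal (\<bar>u x\<bar> powr p * v x) \<partial>\<mu>) + ennreal 0 * (\<integral>\<^sup>+x. ennreal 0 \<partial>\<mu>)"
    unfolding aa_def
  proof (rule int_le_lin3)
    show "\<And>x. x \<in> \<Omega> \<Longrightarrow> 0 \<le> v x \<and> 0 \<le> \<bar>u x\<bar> powr p * v x \<and> 0 \<le> (0::real)" using v0 by simp
    show "AE x in \<mu>. \<bar>\<phi> k x - u x\<bar> powr p * v x \<le> 2 powr p * B powr p * v x + 2 powr p * (\<bar>u x\<bar> powr p * v x) + 0 * 0"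
    proof (rule AE_I2)
      fix x assume x: "x \<in> space \<mu>"
      have "\<bar>\<phi> k x - u x\<bar> powr p \<le> (B + \<bar>u x\<bar>) powr p"
        using B(1)[of x] p0 by (intro powr_mono2) auto
      also have "\<dots> \<le> 2 powr p * (B powr p + \<bar>u x\<bar> powr p)" using B(2) p0 by (intro powr_sum2) auto
      finally have "\<bar>\<phi> k x - u x\<bar> powr p * v x \<le> 2 powr p * (B powr p + \<bar>u x\<bar> powr p) * v x"
        using v0[of x] x by (simp add: mult_right_mono)
      thus "\<bar>\<phi> k x - u x\<bar> powr p * v x \<le> 2 powr p * B powr p * v x + 2 powr p * (\<bar>u x\<bar> powr p * v x) + 0 * 0"
        by (simp add: algebra_simps)
    qed
  qed auto
  also have "\<dots> < \<infinity>" using vfin ufinp by (simp add: ennreal_mult_less_top)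
  finally show ?thesis .
qed

lemma bb_fin: "bb k < \<infinity>"
proof -
  obtain C where C: "C-lipschitz_on UNIV (\<phi> k)" using \<phi>l[of k] unfolding lipc_def by blast
  obtain K0 where K0: "\<And>x. norm (lgrad (\<phi> k) x) \<le> K0" using lgrad_bounded[OF C] by blast
  have "bb k \<le> ennreal (2 powr p * K0 powr p) * (\<integral>\<^sup>+x. ennreal (v x) \<partial>\<mu>)
     + ennreal (2 powr p) * (\<integral>\<^sup>+x. ennreal (hh x) \<partial>\<mu>) + ennreal 0 * (\<integral>\<^sup>+x. ennreal 0 \<partial>\<mu>)"
    unfolding bb_def
  proof (rule int_le_lin3)
    show "\<And>x. x \<in> \<Omega> \<Longrightarrow> 0 \<le> v x \<and> 0 \<le> hh x \<and> 0 \<le> (0::real)" using v0 h0 by simp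
    show "AE x in \<mu>. norm (matsqrt (Q x) *v (lgrad (\<phi> k) x - g x)) powr p \<le> 2 powr p * K0 powr p * v x + 2 powr p * hh x + 0 * 0"
      using h_eq sqrtQ_bound
    proof (rule AE_mp[OF AE_conjI], intro AE_I2 impI, elim conjE)
      fix x assume x: "x \<in> space \<mu>" and he: "norm (matsqrt (Q x) *v g x) powr p = hh x"
        and sb: "\<forall>y. norm (matsqrt (Q x) *v y) powr p \<le> v x * norm y powr p"
      have "norm (matsqrt (Q x) *v (lgrad (\<phi> k) x - g x)) \<le> norm (matsqrt (Q x) *v lgrad (\<phi> k) x) + norm (matsqrt (Q x) *v g x)"
        by (simp add: matrix_vector_mult_diff_distrib norm_triangle_ineq4)
      hence "norm (matsqrt (Q x) *v (lgrad (\<phi> k) x - g x)) powr p \<le> (norm (matsqrt (Q x) *v lgrad (\<phi> k) x) + norm (matsqrt (Q x) *v g x)) powr p"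
        using p0 by (intro powr_mono2) auto
      also have "\<dots> \<le> 2 powr p * (norm (matsqrt (Q x) *v lgrad (\<phi> k) x) powr p + norm (matsqrt (Q x) *v g x) powr p)"
        using p0 by (intro powr_sum2) auto
      also have "norm (matsqrt (Q x) *v lgrad (\<phi> k) x) powr p \<le> K0 powr p * v x"
      proof -
        have "norm (matsqrt (Q x) *v lgrad (\<phi> k) x) powr p \<le> v x * norm (lgrad (\<phi> k) x) powr p" using sb by blast
        also have "\<dots> \<le> v x * K0 powr p" using v0[of x] x K0[of x] p0 by (intro mult_left_mono powr_mono2) auto
        finally show ?thesis by (simp add: mult.commute)
      qed
      finally show "norm (matsqrt (Q x) *v (lgrad (\<phi> k) x - g x)) powr p \<le> 2 powr p * K0 powr p * v x + 2 powr p * hh x + 0 * 0"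
        using he by (simp add: algebra_simps)
    qed
  qed auto
  also have "\<dots> < \<infinity>" using vfin hfin by (simp add: ennreal_mult_less_top)
  finally show ?thesis .
qed


lemma enn_lim:
  fixes a b :: "nat \<Rightarrow> ennreal"
  assumes "(\<lambda>k. enn2real (a k) powr (1/p) + enn2real (b k) powr (1/p)) \<longlonglongrightarrow> 0"
  shows "(\<lambda>k. enn2real (a k)) \<longlonglongrightarrow> 0"
proof -
  have x: "(\<lambda>k. enn2real (a k) powr (1/p)) \<longlonglongrightarrow> 0"
    by (rule tendsto_sandwich[OF _ _ tendsto_const assms]) auto
  have "(\<lambda>k. (enn2real (a k) powr (1/p)) powr p) \<longlonglongrightarrow> 0"
    by (rule tendsto_zero_powrI[OF x tendsto_const]) (auto simp: p0)
  moreover have "(enn2real (a k) powr (1/p)) powr p = enn2real (a k)" for k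
    using p0 by (simp add: powr_powr)
  ultimately show ?thesis by simp
qed

lemma HN: "H_norm p Q v \<Omega> (\<lambda>x. \<phi> k x - u x) (\<lambda>x. lgrad (\<phi> k) x - g x)
   = enn2real (aa k) powr (1/p) + enn2real (bb k) powr (1/p)"
  unfolding H_norm_def Lw_norm_def LQ_norm_def setint aa_def bb_def ..

lemma ab_small:
  assumes "\<delta> > 0"
  shows "\<exists>k. aa k \<le> ennreal \<delta> \<and> bb k \<le> ennreal \<delta>"
proof -
  have l: "(\<lambda>k. enn2real (aa k) powr (1/p) + enn2real (bb k) powr (1/p)) \<longlonglongrightarrow> 0"
    using \<phi>lim unfolding HN .
  have la: "(\<lambda>k. enn2real (aa k)) \<longlonglongrightarrow> 0" by (rule enn_lim[OF l])
  have lb: "(\<lambda>k. enn2real (bb k)) \<longlonglongrightarrow> 0" by (rule enn_lim) (use l in \<open>simp add: add.commute\<close>)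
  have "\<forall>\<^sub>F k in sequentially. enn2real (aa k) < \<delta> \<and> enn2real (bb k) < \<delta>"
    using order_tendstoD(2)[OF la assms] order_tendstoD(2)[OF lb assms] by eventually_elim auto
  then obtain k where k: "enn2real (aa k) < \<delta>" "enn2real (bb k) < \<delta>"
    using eventually_sequentially by (metis (no_types, lifting) order_refl)
  have "aa k = ennreal (enn2real (aa k))" using aa_fin[of k] by (simp add: ennreal_enn2real_if less_top[symmetric])
  moreover have "bb k = ennreal (enn2real (bb k))" using bb_fin[of k] by (simp add: ennreal_enn2real_if less_top[symmetric])
  ultimately show ?thesis using k by (metis ennreal_leI less_imp_le)
qed


lemma T12:
  assumes q: "q > 0" and fin: "(\<integral>\<^sup>+x. ennreal (\<bar>u x\<bar> powr q * v x) \<partial>\<mu>) < \<infinity>"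
  shows "(\<lambda>n. \<integral>\<^sup>+x. ennreal (\<bar>Sm (real (Suc n)) (u x) - u x\<bar> powr q * v x) \<partial>\<mu>) \<longlonglongrightarrow> 0"
proof (rule dom_conv0[where w="\<lambda>x. \<bar>u x\<bar> powr q * v x"])
  show "\<And>n. AE x in \<mu>. 0 \<le> \<bar>Sm (real (Suc n)) (u x) - u x\<bar> powr q * v x \<and>
      \<bar>Sm (real (Suc n)) (u x) - u x\<bar> powr q * v x \<le> \<bar>u x\<bar> powr q * v x"
  proof (intro AE_I2 conjI)
    fix n x assume x: "x \<in> space \<mu>"
    show "0 \<le> \<bar>Sm (real (Suc n)) (u x) - u x\<bar> powr q * v x" using v0[of x] x by simp
    have "\<bar>Sm (real (Suc n)) (u x) - u x\<bar> powr q \<le> \<bar>u x\<bar> powr q"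
      using Sm_diff_le[of "real (Suc n)" "u x"] q by (intro powr_mono2) auto
    thus "\<bar>Sm (real (Suc n)) (u x) - u x\<bar> powr q * v x \<le> \<bar>u x\<bar> powr q * v x"
      using v0[of x] x by (simp add: mult_right_mono)
  qed
  show "AE x in \<mu>. (\<lambda>n. \<bar>Sm (real (Suc n)) (u x) - u x\<bar> powr q * v x) \<longlonglongrightarrow> 0"
  proof (rule AE_I2)
    fix x
    have "(\<lambda>n. Sm (real (Suc n)) (u x) - u x) \<longlonglongrightarrow> 0"
      using tendsto_diff[OF Sm_lim[of "u x"] tendsto_const[of "u x"]] by simp
    hence "(\<lambda>n. \<bar>Sm (real (Suc n)) (u x) - u x\<bar>) \<longlonglongrightarrow> 0" by (simp add: tendsto_rabs_zero_iff)
    hence "(\<lambda>n. \<bar>Sm (real (Suc n)) (u x) - u x\<bar> powr q) \<longlonglongrightarrow> 0"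
      by (rule tendsto_zero_powrI[OF _ tendsto_const]) (auto simp: q)
    thus "(\<lambda>n. \<bar>Sm (real (Suc n)) (u x) - u x\<bar> powr q * v x) \<longlonglongrightarrow> 0"
      using tendsto_mult[OF _ tendsto_const, of _ 0 _ "v x"] by simp
  qed
  show "\<And>n. (\<lambda>x. \<bar>Sm (real (Suc n)) (u x) - u x\<bar> powr q * v x) \<in> borel_measurable \<mu>" by measurable
  show "(\<lambda>x. \<bar>u x\<bar> powr q * v x) \<in> borel_measurable \<mu>" by measurable
qed (rule fin)

lemma T3:
  "(\<lambda>n. \<integral>\<^sup>+x. ennreal (min 1 (2 * (u x)^2 / (real (Suc n))^2) powr p * hh x) \<partial>\<mu>) \<longlonglongrightarrow> 0"
proof (rule dom_conv0[where w="hh"])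
  show "\<And>n. AE x in \<mu>. 0 \<le> min 1 (2 * (u x)^2 / (real (Suc n))^2) powr p * hh x \<and>
      min 1 (2 * (u x)^2 / (real (Suc n))^2) powr p * hh x \<le> hh x"
  proof (intro AE_I2 conjI)
    fix n x
    show "0 \<le> min 1 (2 * (u x)^2 / (real (Suc n))^2) powr p * hh x" using h0 by simp
    have "min 1 (2 * (u x)^2 / (real (Suc n))^2) powr p \<le> 1 powr p"
      using p0 by (intro powr_mono2) auto
    hence "min 1 (2 * (u x)^2 / (real (Suc n))^2) powr p \<le> 1" by simp
    thus "min 1 (2 * (u x)^2 / (real (Suc n))^2) powr p * hh x \<le> hh x"
      using h0[of x] by (simp add: mult_left_le_one_le)
  qed
  show "\<And>n. (\<lambda>x. min 1 (2 * (u x)^2 / (real (Suc n))^2) powr p * hh x) \<in> borel_measurable \<mu>" by measurable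
  show "AE x in \<mu>. (\<lambda>n. min 1 (2 * (u x)^2 / (real (Suc n))^2) powr p * hh x) \<longlonglongrightarrow> 0"
  proof (rule AE_I2)
    fix x
    have "(\<lambda>n. 2 * (u x)^2 / (real (Suc n))^2) \<longlonglongrightarrow> 0"
    proof (rule tendsto_divide_0[OF tendsto_const])
      have "filterlim (\<lambda>n. real (Suc n)) at_top sequentially"
        using filterlim_real_sequentially filterlim_sequentially_Suc[of real at_top] by simp
      hence "filterlim (\<lambda>n. (real (Suc n))^2) at_top sequentially"
        using filterlim_pow_at_top[of 2 "\<lambda>n. real (Suc n)" sequentially] by simp
      thus "filterlim (\<lambda>n. (real (Suc n))^2) at_infinity sequentially"
        by (rule filterlim_at_top_imp_at_infinity)
    qed
    hence "(\<lambda>n. min 1 (2 * (u x)^2 / (real (Suc n))^2)) \<longlonglongrightarrow> min 1 0"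
      by (intro tendsto_min tendsto_const)
    hence "(\<lambda>n. min 1 (2 * (u x)^2 / (real (Suc n))^2) powr p) \<longlonglongrightarrow> 0"
      by (intro tendsto_zero_powrI[OF _ tendsto_const]) (auto simp: p0)
    thus "(\<lambda>n. min 1 (2 * (u x)^2 / (real (Suc n))^2) powr p * hh x) \<longlonglongrightarrow> 0"
      using tendsto_mult[OF _ tendsto_const, of _ 0 _ "hh x"] by simp
  qed
qed (rule hm, rule hfin)

lemma T4:
  "(\<lambda>n. \<integral>\<^sup>+x. ennreal (if hh x > real n * v x then hh x else 0) \<partial>\<mu>) \<longlonglongrightarrow> 0"
proof (rule dom_conv0[where w="hh"])
  show "\<And>n. AE x in \<mu>. 0 \<le> (if hh x > real n * v x then hh x else 0) \<and>
      (if hh x > real n * v x then hh x else 0) \<le> hh x"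
    using h0 by (intro AE_I2) auto
  show "\<And>n. (\<lambda>x. if hh x > real n * v x then hh x else 0) \<in> borel_measurable \<mu>" by measurable
  show "AE x in \<mu>. (\<lambda>n. if hh x > real n * v x then hh x else 0) \<longlonglongrightarrow> 0"
    using h_le
  proof (rule AE_mp, intro AE_I2 impI)
    fix x assume x: "x \<in> space \<mu>" and hl: "hh x \<le> v x * norm (g x) powr p"
    show "(\<lambda>n. if hh x > real n * v x then hh x else 0) \<longlonglongrightarrow> 0"
    proof (cases "v x = 0")
      case True
      hence "hh x = 0" using hl h0[of x] by simp
      hence "(\<lambda>n. if hh x > real n * v x then hh x else 0) = (\<lambda>n. 0)" by auto
      thus ?thesis by simp
    next
      case False
      hence vp: "v x > 0" using v0[of x] x by simp
      obtain N :: nat where N: "hh x / v x < real N" using reals_Archimedean2 by blast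
      have "\<forall>\<^sub>F n in sequentially. (if hh x > real n * v x then hh x else 0) = 0"
        unfolding eventually_sequentially
      proof (intro exI[of _ N] allI impI)
        fix n assume "N \<le> n"
        hence "hh x / v x < real n" using N by linarith
        hence "hh x < real n * v x" using vp by (simp add: divide_less_eq)
        thus "(if hh x > real n * v x then hh x else 0) = 0" by simp
      qed
      thus ?thesis by (rule tendsto_eventually)
    qed
  qed
qed (rule hm, rule hfin)


lemma approx_eps:
  assumes \<eta>: "\<eta> > 0"
  shows "\<exists>\<psi>. lipc \<Omega> \<psi> \<and> (\<integral>\<^sup>+x. ennreal (\<bar>\<psi> x - u x\<bar> powr p * v x) \<partial>\<mu>) \<le> ennreal \<eta>
     \<and> (\<integral>\<^sup>+x. ennreal (norm (matsqrt (Q x) *v (lgrad \<psi> x - g x)) powr p) \<partial>\<mu>) \<le> ennreal \<eta>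
     \<and> (\<integral>\<^sup>+x. ennreal (\<bar>\<psi> x - u x\<bar> powr 2 * v x) \<partial>\<mu>) \<le> ennreal \<eta>"
proof -
  have p3: "3 powr p > 0" and p2: "2 powr p > 0" by auto
  define c where "c = \<eta> / (4 * 3 powr p)"
  define c1 where "c1 = \<eta> / (2 * 2 powr p)"
  define c2 where "c2 = \<eta> / 6"
  have cpos: "c > 0" "c1 > 0" "c2 > 0" unfolding c_def c1_def c2_def using \<eta> p3 p2 by auto
  note L1 = T12[OF p0 ufinp]
  note L2 = T12[of 2, OF _ ufin2, simplified]
  have "\<forall>\<^sub>F n in sequentially.
      (\<integral>\<^sup>+x. ennreal (\<bar>Sm (real (Suc n)) (u x) - u x\<bar> powr p * v x) \<partial>\<mu>) < ennreal c1 \<and>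
      (\<integral>\<^sup>+x. ennreal (\<bar>Sm (real (Suc n)) (u x) - u x\<bar> powr 2 * v x) \<partial>\<mu>) < ennreal c2 \<and>
      (\<integral>\<^sup>+x. ennreal (min 1 (2 * (u x)^2 / (real (Suc n))^2) powr p * hh x) \<partial>\<mu>) < ennreal c"
  proof -
    have e: "0 < ennreal c1" "0 < ennreal c2" "0 < ennreal c" using cpos by auto
    show ?thesis using order_tendstoD(2)[OF L1 e(1)] order_tendstoD(2)[OF L2 e(2)]
      order_tendstoD(2)[OF T3 e(3)] by eventually_elim auto
  qed
  then obtain n0 where n0:
      "(\<integral>\<^sup>+x. ennreal (\<bar>Sm (real (Suc n0)) (u x) - u x\<bar> powr p * v x) \<partial>\<mu>) < ennreal c1"
      "(\<integral>\<^sup>+x. ennreal (\<bar>Sm (real (Suc n0)) (u x) - u x\<bar> powr 2 * v x) \<partial>\<mu>) < ennreal c2"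
      "(\<integral>\<^sup>+x. ennreal (min 1 (2 * (u x)^2 / (real (Suc n0))^2) powr p * hh x) \<partial>\<mu>) < ennreal c"
    using eventually_sequentially by (metis (no_types, lifting) order_refl)
  have "\<forall>\<^sub>F n in sequentially. (\<integral>\<^sup>+x. ennreal (if hh x > real n * v x then hh x else 0) \<partial>\<mu>) < ennreal c"
    using order_tendstoD(2)[OF T4] cpos by auto
  then obtain nR where nR: "(\<integral>\<^sup>+x. ennreal (if hh x > real nR * v x then hh x else 0) \<partial>\<mu>) < ennreal c"
    using eventually_sequentially by (metis (no_types, lifting) order_refl)
  define M where "M = real (Suc n0)"
  define R where "R = real nR"
  have M1: "1 \<le> M" and Mpos: "0 < M" and R0: "0 \<le> R" unfolding M_def R_def by auto
  define V where "V = enn2real (\<integral>\<^sup>+x. ennreal (v x) \<partial>\<mu>)"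
  have Veq: "(\<integral>\<^sup>+x. ennreal (v x) \<partial>\<mu>) = ennreal V" unfolding V_def using vfin
    by (simp add: ennreal_enn2real_if less_top[symmetric])
  have V0: "0 \<le> V" unfolding V_def by simp
  define \<delta> where "\<delta> = sqrt (\<eta> / (6 * (V + 1)))"
  have \<delta>pos: "\<delta> > 0" unfolding \<delta>_def using \<eta> V0 by simp
  have \<delta>sq: "\<delta>^2 = \<eta> / (6 * (V + 1))" unfolding \<delta>_def using \<eta> V0 by simp
  define K where "K = M * pi"
  define C2 where "C2 = 2 * K^2 / \<delta> powr p"
  have C20: "0 \<le> C2" unfolding C2_def by simp
  define d where "d = min (min c1 (\<eta> / (3 * (C2 + 1)))) (min c (c / (R * 2 powr p + 1)))"
  have Rp: "R * 2 powr p + 1 > 0" using R0 p2 by (simp add: add_nonneg_pos)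
  have dpos: "d > 0" unfolding d_def using cpos \<eta> C20 Rp by auto
  obtain k where ak: "aa k \<le> ennreal d" and bk: "bb k \<le> ennreal d" using ab_small[OF dpos] by blast
  define \<psi> where "\<psi> = (\<lambda>y. Sm M (\<phi> k y))"
  have lip: "lipc \<Omega> \<psi>" unfolding \<psi>_def by (rule lipc_Sm[OF Mpos \<phi>l])
  have I1: "(\<integral>\<^sup>+x. ennreal (\<bar>\<psi> x - u x\<bar> powr p * v x) \<partial>\<mu>) \<le> ennreal \<eta>"
  proof -
    have "(\<integral>\<^sup>+x. ennreal (\<bar>\<psi> x - u x\<bar> powr p * v x) \<partial>\<mu>) \<le> ennreal (2 powr p) * aa k
       + ennreal (2 powr p) * (\<integral>\<^sup>+x. ennreal (\<bar>Sm M (u x) - u x\<bar> powr p * v x) \<partial>\<mu>)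
       + ennreal 0 * (\<integral>\<^sup>+x. ennreal 0 \<partial>\<mu>)"
      unfolding aa_def
    proof (rule int_le_lin3)
      show "\<And>x. x \<in> \<Omega> \<Longrightarrow> 0 \<le> \<bar>\<phi> k x - u x\<bar> powr p * v x \<and> 0 \<le> \<bar>Sm M (u x) - u x\<bar> powr p * v x \<and> 0 \<le> (0::real)"
        using v0 by simp
      show "AE x in \<mu>. \<bar>\<psi> x - u x\<bar> powr p * v x \<le> 2 powr p * (\<bar>\<phi> k x - u x\<bar> powr p * v x)
          + 2 powr p * (\<bar>Sm M (u x) - u x\<bar> powr p * v x) + 0 * 0"
      proof (rule AE_I2)
        fix x assume x: "x \<in> space \<mu>"
        have "\<bar>\<psi> x - u x\<bar> \<le> \<bar>\<phi> k x - u x\<bar> + \<bar>Sm M (u x) - u x\<bar>"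
          using Sm_lip[OF Mpos, of "\<phi> k x" "u x"] unfolding \<psi>_def by linarith
        hence "\<bar>\<psi> x - u x\<bar> powr p \<le> (\<bar>\<phi> k x - u x\<bar> + \<bar>Sm M (u x) - u x\<bar>) powr p"
          using p0 by (intro powr_mono2) auto
        also have "\<dots> \<le> 2 powr p * (\<bar>\<phi> k x - u x\<bar> powr p + \<bar>Sm M (u x) - u x\<bar> powr p)"
          using p0 by (intro powr_sum2) auto
        finally have "\<bar>\<psi> x - u x\<bar> powr p * v x \<le> 2 powr p * (\<bar>\<phi> k x - u x\<bar> powr p + \<bar>Sm M (u x) - u x\<bar> powr p) * v x"
          using v0[of x] x by (intro mult_right_mono) auto
        thus "\<bar>\<psi> x - u x\<bar> powr p * v x \<le> 2 powr p * (\<bar>\<phi> k x - u x\<bar> powr p * v x)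
          + 2 powr p * (\<bar>Sm M (u x) - u x\<bar> powr p * v x) + 0 * 0"
          by (simp add: distrib_left distrib_right mult.assoc)
      qed
    qed simp_all
    also have "\<dots> \<le> ennreal (2 powr p * d + 2 powr p * c1 + 0 * 0)"
      by (rule enn_comb3[OF order_refl ak]) (use n0(1) cpos dpos in \<open>simp_all add: M_def less_imp_le\<close>)
    also have "\<dots> \<le> ennreal \<eta>"
    proof (rule ennreal_leI)
      have "2 powr p * d \<le> 2 powr p * c1" using p2 by (intro mult_left_mono) (auto simp: d_def)
      moreover have "2 powr p * c1 = \<eta> / 2" unfolding c1_def using p2 by simp
      ultimately show "2 powr p * d + 2 powr p * c1 + 0 * 0 \<le> \<eta>" by simp
    qed
    finally show ?thesis .
  qed
  have I3: "(\<integral>\<^sup>+x. ennreal (\<bar>\<psi> x - u x\<bar> powr 2 * v x) \<partial>\<mu>) \<le> ennreal \<eta>"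
  proof -
    have "(\<integral>\<^sup>+x. ennreal (\<bar>\<psi> x - u x\<bar> powr 2 * v x) \<partial>\<mu>) \<le> ennreal (2 * \<delta>^2) * (\<integral>\<^sup>+x. ennreal (v x) \<partial>\<mu>)
       + ennreal C2 * aa k
       + ennreal 2 * (\<integral>\<^sup>+x. ennreal (\<bar>Sm M (u x) - u x\<bar> powr 2 * v x) \<partial>\<mu>)"
      unfolding aa_def
    proof (rule int_le_lin3)
      show "\<And>x. x \<in> \<Omega> \<Longrightarrow> 0 \<le> v x \<and> 0 \<le> \<bar>\<phi> k x - u x\<bar> powr p * v x \<and> 0 \<le> \<bar>Sm M (u x) - u x\<bar> powr 2 * v x"
        using v0 by simp
      show "AE x in \<mu>. \<bar>\<psi> x - u x\<bar> powr 2 * v x \<le> 2 * \<delta>^2 * v x + C2 * (\<bar>\<phi> k x - u x\<bar> powr p * v x)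
          + 2 * (\<bar>Sm M (u x) - u x\<bar> powr 2 * v x)"
      proof (rule AE_I2)
        fix x assume x: "x \<in> space \<mu>"
        define z where "z = \<bar>Sm M (\<phi> k x) - Sm M (u x)\<bar>"
        define e where "e = \<bar>Sm M (u x) - u x\<bar>"
        have zW: "z \<le> \<bar>\<phi> k x - u x\<bar>" unfolding z_def by (rule Sm_lip[OF Mpos])
        have zK: "z \<le> K"
        proof -
          have "z \<le> \<bar>Sm M (\<phi> k x)\<bar> + \<bar>Sm M (u x)\<bar>" unfolding z_def by linarith
          also have "\<dots> \<le> M * pi / 2 + M * pi / 2" using Sm_bound[OF Mpos] by (intro add_mono) auto
          finally show ?thesis unfolding K_def by simp
        qed
        have z0: "0 \<le> z" "0 \<le> e" unfolding z_def e_def by auto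
        have "\<bar>\<psi> x - u x\<bar> \<le> z + e" unfolding \<psi>_def z_def e_def by linarith
        hence "(\<psi> x - u x)^2 \<le> (z + e)^2" by (metis abs_ge_zero order_trans power2_abs power_mono)
        also have "\<dots> \<le> 2 * z^2 + 2 * e^2"
        proof -
          have "2 * z^2 + 2 * e^2 - (z + e)^2 = (z - e)^2" by (simp add: power2_eq_square algebra_simps)
          thus ?thesis using zero_le_power2[of "z - e"] by linarith
        qed
        also have "z^2 \<le> \<delta>^2 + K^2 / \<delta> powr p * \<bar>\<phi> k x - u x\<bar> powr p"
          by (rule sq_split[OF z0(1) zK zW \<delta>pos p0])
        finally have "(\<psi> x - u x)^2 \<le> 2 * \<delta>^2 + C2 * \<bar>\<phi> k x - u x\<bar> powr p + 2 * e^2"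
          unfolding C2_def by (simp add: algebra_simps)
        hence "(\<psi> x - u x)^2 * v x \<le> (2 * \<delta>^2 + C2 * \<bar>\<phi> k x - u x\<bar> powr p + 2 * e^2) * v x"
          using v0[of x] x by (intro mult_right_mono) auto
        thus "\<bar>\<psi> x - u x\<bar> powr 2 * v x \<le> 2 * \<delta>^2 * v x + C2 * (\<bar>\<phi> k x - u x\<bar> powr p * v x)
          + 2 * (\<bar>Sm M (u x) - u x\<bar> powr 2 * v x)"
          unfolding abs_powr2 e_def by (simp add: distrib_right mult.assoc)
      qed
    qed (simp_all add: C20)
    also have "\<dots> \<le> ennreal (2 * \<delta>^2 * V + C2 * d + 2 * c2)"
      by (rule enn_comb3[OF order_refl _ ak]) (use n0(2) cpos dpos C20 V0 Veq in \<open>simp_all add: M_def less_imp_le\<close>)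
    also have "\<dots> \<le> ennreal \<eta>"
    proof (rule ennreal_leI)
      have "2 * \<delta>^2 * V = \<eta> / 3 * (V / (V + 1))" unfolding \<delta>sq using V0 by (simp add: field_simps)
      also have "\<dots> \<le> \<eta> / 3 * 1" using V0 \<eta> by (intro mult_left_mono) auto
      finally have a: "2 * \<delta>^2 * V \<le> \<eta> / 3" by simp
      have "C2 * d \<le> C2 * (\<eta> / (3 * (C2 + 1)))" using C20 by (intro mult_left_mono) (auto simp: d_def)
      also have "\<dots> = \<eta> / 3 * (C2 / (C2 + 1))" using C20 by (simp add: field_simps)
      also have "\<dots> \<le> \<eta> / 3 * 1" using C20 \<eta> by (intro mult_left_mono) auto
      finally have b: "C2 * d \<le> \<eta> / 3" by simp
      show "2 * \<delta>^2 * V + C2 * d + 2 * c2 \<le> \<eta>" using a b unfolding c2_def by simp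
    qed
    finally show ?thesis .
  qed
  have I2: "(\<integral>\<^sup>+x. ennreal (norm (matsqrt (Q x) *v (lgrad \<psi> x - g x)) powr p) \<partial>\<mu>) \<le> ennreal \<eta>"
  proof -
    define X where "X x = norm (matsqrt (Q x) *v (lgrad (\<phi> k) x - g x)) powr p" for x
    define B where "B x = 3 powr p * (R * 2 powr p * (\<bar>\<phi> k x - u x\<bar> powr p * v x)
        + (if hh x > R * v x then hh x else 0) + min 1 (2 * (u x)^2 / M^2) powr p * hh x)" for x
    have Bm[measurable]: "B \<in> borel_measurable \<mu>" unfolding B_def by measurable
    have pw: "AE x in \<mu>. ennreal (norm (matsqrt (Q x) *v (lgrad \<psi> x - g x)) powr p)
        \<le> ennreal (3 powr p) * ennreal (X x) + ennreal (B x)"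
      using h_eq
    proof (rule AE_mp, intro AE_I2 impI)
      fix x assume x: "x \<in> space \<mu>" and he: "norm (matsqrt (Q x) *v g x) powr p = hh x"
      have vx: "0 \<le> v x" using v0 x by simp
      have "norm (matsqrt (Q x) *v (lgrad \<psi> x - g x)) powr p \<le> 3 powr p * X x + B x"
        unfolding \<psi>_def X_def B_def by (rule grad_pt_p[OF M1 p0 he R0 vx])
      hence "ennreal (norm (matsqrt (Q x) *v (lgrad \<psi> x - g x)) powr p) \<le> ennreal (3 powr p * X x + B x)"
        by (rule ennreal_leI)
      also have "\<dots> = ennreal (3 powr p) * ennreal (X x) + ennreal (B x)"
      proof -
        have "0 \<le> B x" unfolding B_def using vx h0[of x] R0 by (intro mult_nonneg_nonneg add_nonneg_nonneg) auto
        moreover have "0 \<le> X x" unfolding X_def by simp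
        ultimately show ?thesis by (simp add: ennreal_plus ennreal_mult)
      qed
      finally show "ennreal (norm (matsqrt (Q x) *v (lgrad \<psi> x - g x)) powr p)
        \<le> ennreal (3 powr p) * ennreal (X x) + ennreal (B x)" .
    qed
    have e1: "(\<integral>\<^sup>+x. ennreal (norm (matsqrt (Q x) *v (lgrad \<psi> x - g x)) powr p) \<partial>\<mu>)
        \<le> (\<integral>\<^sup>+x. ennreal (3 powr p) * ennreal (X x) + ennreal (B x) \<partial>\<mu>)"
      by (rule nn_integral_mono_AE[OF pw])
    have e2: "(\<integral>\<^sup>+x. ennreal (3 powr p) * ennreal (X x) + ennreal (B x) \<partial>\<mu>)
        \<le> (\<integral>\<^sup>+x. ennreal (3 powr p) * ennreal (X x) \<partial>\<mu>) + (\<integral>\<^sup>+x. ennreal (B x) \<partial>\<mu>)"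
      by (rule nn_integral_add_le) measurable
    have e3: "(\<integral>\<^sup>+x. ennreal (3 powr p) * ennreal (X x) \<partial>\<mu>) \<le> ennreal (3 powr p * d)"
    proof -
      have "(\<integral>\<^sup>+x. ennreal (3 powr p) * ennreal (X x) \<partial>\<mu>) \<le> ennreal (3 powr p) * bb k"
        unfolding bb_def X_def by (rule nn_integral_cmult_le[OF p3])
      also have "\<dots> \<le> ennreal (3 powr p) * ennreal d" using bk by (rule mult_left_mono) simp
      also have "\<dots> = ennreal (3 powr p * d)" using p3 dpos by (simp add: ennreal_mult)
      finally show ?thesis .
    qed
    have e4: "(\<integral>\<^sup>+x. ennreal (B x) \<partial>\<mu>) \<le> ennreal (3 powr p * R * 2 powr p * d + 3 powr p * c + 3 powr p * c)"
    proof -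
      have "(\<integral>\<^sup>+x. ennreal (B x) \<partial>\<mu>) \<le> ennreal (3 powr p * R * 2 powr p) * aa k
         + ennreal (3 powr p) * (\<integral>\<^sup>+x. ennreal (if hh x > real nR * v x then hh x else 0) \<partial>\<mu>)
         + ennreal (3 powr p) * (\<integral>\<^sup>+x. ennreal (min 1 (2 * (u x)^2 / (real (Suc n0))^2) powr p * hh x) \<partial>\<mu>)"
        unfolding aa_def
      proof (rule int_le_lin3)
        show "\<And>x. x \<in> \<Omega> \<Longrightarrow> 0 \<le> \<bar>\<phi> k x - u x\<bar> powr p * v x \<and> 0 \<le> (if hh x > real nR * v x then hh x else 0)
           \<and> 0 \<le> min 1 (2 * (u x)^2 / (real (Suc n0))^2) powr p * hh x"
          using v0 h0 by simp
        show "AE x in \<mu>. B x \<le> 3 powr p * R * 2 powr p * (\<bar>\<phi> k x - u x\<bar> powr p * v x)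
           + 3 powr p * (if hh x > real nR * v x then hh x else 0)
           + 3 powr p * (min 1 (2 * (u x)^2 / (real (Suc n0))^2) powr p * hh x)"
          by (rule AE_I2) (simp add: B_def R_def M_def distrib_left mult.assoc)
      qed (use R0 in simp_all)
      also have "\<dots> \<le> ennreal (3 powr p * R * 2 powr p * d + 3 powr p * c + 3 powr p * c)"
        by (rule enn_comb3[OF order_refl ak]) (use nR n0(3) cpos dpos R0 in \<open>simp_all add: less_imp_le\<close>)
      finally show ?thesis .
    qed
    have "(\<integral>\<^sup>+x. ennreal (norm (matsqrt (Q x) *v (lgrad \<psi> x - g x)) powr p) \<partial>\<mu>)
        \<le> (\<integral>\<^sup>+x. ennreal (3 powr p) * ennreal (X x) \<partial>\<mu>) + (\<integral>\<^sup>+x. ennreal (B x) \<partial>\<mu>)"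
      using e1 e2 by (rule order_trans)
    also have "\<dots> \<le> ennreal \<eta>"
    proof (rule enn_add_le[OF e3 e4])
      show "0 \<le> 3 powr p * d" using dpos by simp
      show "0 \<le> 3 powr p * R * 2 powr p * d + 3 powr p * c + 3 powr p * c" using dpos cpos R0 by simp
      have d1: "3 powr p * d \<le> 3 powr p * c" using p3 by (intro mult_left_mono) (auto simp: d_def)
      have "R * 2 powr p * d \<le> R * 2 powr p * (c / (R * 2 powr p + 1))"
        using R0 p2 by (intro mult_left_mono) (auto simp: d_def)
      also have "\<dots> = c * (R * 2 powr p / (R * 2 powr p + 1))" using Rp by (simp add: field_simps)
      also have "\<dots> \<le> c * 1" using cpos Rp R0 by (intro mult_left_mono) auto
      finally have "R * 2 powr p * d \<le> c" by simp
      hence d2: "3 powr p * (R * 2 powr p * d) \<le> 3 powr p * c" using p3 by (intro mult_left_mono) auto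
      have e4: "4 * (3 powr p * c) = \<eta>" unfolding c_def using p3 by simp
      have eq: "3 powr p * R * 2 powr p * d = 3 powr p * (R * 2 powr p * d)" by (simp add: mult.assoc)
      show "3 powr p * d + (3 powr p * R * 2 powr p * d + 3 powr p * c + 3 powr p * c) \<le> \<eta>"
        using d1 d2 e4 eq by linarith
    qed
    finally show ?thesis .
  qed
  show ?thesis using lip I1 I2 I3 by blast
qed

end

end


lemma enn2real_le_eta: "(x::ennreal) \<le> ennreal \<eta> \<Longrightarrow> 0 \<le> \<eta> \<Longrightarrow> enn2real x \<le> \<eta>"
  using enn2real_mono[of x "ennreal \<eta>"] by simp

theorem proposition3p6:
  fixes \<Omega> :: "(real^'n) set" and p :: real
    and Q :: "real^'n \<Rightarrow> real^'n^'n" and v :: "real^'n \<Rightarrow> real"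
  assumes "CARD('n) \<ge> 3"
    and "open \<Omega>" and "connected \<Omega>" and "\<Omega> \<noteq> {}" and "bounded \<Omega>"
    and "1 < p"
    and "hypH p Q v \<Omega>"
  shows "\<forall>u g. in_H0 p Q v \<Omega> u g \<and> Lw_mem 2 v \<Omega> u \<longrightarrow>
           (\<exists>\<phi>. (\<forall>k. lipc \<Omega> (\<phi> k)) \<and>
              (\<lambda>k. H_norm p Q v \<Omega> (\<lambda>x. \<phi> k x - u x) (\<lambda>x. lgrad (\<phi> k) x - g x)
                   + Lw_norm 2 v \<Omega> (\<lambda>x. \<phi> k x - u x)) \<longlonglongrightarrow> 0)"
proof (intro allI impI, elim conjE)
  fix u g
  assume h: "in_H0 p Q v \<Omega> u g" and u2: "Lw_mem 2 v \<Omega> u"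
  have \<Omega>s: "\<Omega> \<in> sets lebesgue" using assms(2) by simp
  have si: "(\<integral>\<^sup>+x\<in>\<Omega>. f x \<partial>lebesgue) = (\<integral>\<^sup>+x. f x \<partial>lebesgue_on \<Omega>)" for f
    by (rule nn_integral_restrict_space[symmetric]) (simp add: \<Omega>s)
  obtain \<phi> where up: "Lw_mem p v \<Omega> u" and gQ: "LQ_mem p Q \<Omega> g" and \<phi>l: "\<And>k. lipc \<Omega> (\<phi> k)"
    and \<phi>lim: "(\<lambda>k. H_norm p Q v \<Omega> (\<lambda>x. \<phi> k x - u x) (\<lambda>x. lgrad (\<phi> k) x - g x)) \<longlonglongrightarrow> 0"
    using h unfolding in_H0_def by blast
  define Tot where "Tot \<psi> = H_norm p Q v \<Omega> (\<lambda>x. \<psi> x - u x) (\<lambda>x. lgrad \<psi> x - g x)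
                   + Lw_norm 2 v \<Omega> (\<lambda>x. \<psi> x - u x)" for \<psi>
  define Bd where "Bd j = 2 * (1 / real (Suc j)) powr (1 / p) + (1 / real (Suc j)) powr (1 / 2)" for j
  have p0: "0 < p" using assms(6) by simp
  have ex: "\<exists>\<psi>. lipc \<Omega> \<psi> \<and> Tot \<psi> \<le> Bd j" for j
  proof -
    define \<eta> where "\<eta> = 1 / real (Suc j)"
    have \<eta>: "\<eta> > 0" unfolding \<eta>_def by simp
    obtain \<psi> where l: "lipc \<Omega> \<psi>"
      and i1: "(\<integral>\<^sup>+x. ennreal (\<bar>\<psi> x - u x\<bar> powr p * v x) \<partial>lebesgue_on \<Omega>) \<le> ennreal \<eta>"
      and i2: "(\<integral>\<^sup>+x. ennreal (norm (matsqrt (Q x) *v (lgrad \<psi> x - g x)) powr p) \<partial>lebesgue_on \<Omega>) \<le> ennreal \<eta>"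
      and i3: "(\<integral>\<^sup>+x. ennreal (\<bar>\<psi> x - u x\<bar> powr 2 * v x) \<partial>lebesgue_on \<Omega>) \<le> ennreal \<eta>"
      using approx_eps[OF assms(2) assms(6) assms(7) up u2 gQ \<phi>l \<phi>lim \<eta>] by blast
    have "Tot \<psi> = enn2real (\<integral>\<^sup>+x. ennreal (\<bar>\<psi> x - u x\<bar> powr p * v x) \<partial>lebesgue_on \<Omega>) powr (1/p)
        + enn2real (\<integral>\<^sup>+x. ennreal (norm (matsqrt (Q x) *v (lgrad \<psi> x - g x)) powr p) \<partial>lebesgue_on \<Omega>) powr (1/p)
        + enn2real (\<integral>\<^sup>+x. ennreal (\<bar>\<psi> x - u x\<bar> powr 2 * v x) \<partial>lebesgue_on \<Omega>) powr (1/2)"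
      unfolding Tot_def H_norm_def Lw_norm_def LQ_norm_def si by simp
    also have "\<dots> \<le> \<eta> powr (1/p) + \<eta> powr (1/p) + \<eta> powr (1/2)"
      using \<eta> p0 by (intro add_mono powr_mono2 enn2real_le_eta i1 i2 i3) auto
    also have "\<dots> = Bd j" unfolding Bd_def \<eta>_def by simp
    finally show ?thesis using l by blast
  qed
  then obtain \<Psi> where \<Psi>: "\<And>j. lipc \<Omega> (\<Psi> j)" "\<And>j. Tot (\<Psi> j) \<le> Bd j" by metis
  have "Bd \<longlonglongrightarrow> 2 * 0 + 0"
  proof -
    have z: "(\<lambda>j. 1 / real (Suc j)) \<longlonglongrightarrow> 0" using LIMSEQ_inverse_real_of_nat by (simp add: inverse_eq_divide)
    have a: "(\<lambda>j. (1 / real (Suc j)) powr (1 / p)) \<longlonglongrightarrow> 0"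
      by (rule tendsto_zero_powrI[OF z tendsto_const]) (auto simp: p0)
    have b: "(\<lambda>j. (1 / real (Suc j)) powr (1 / 2)) \<longlonglongrightarrow> 0"
      by (rule tendsto_zero_powrI[OF z tendsto_const]) auto
    show ?thesis unfolding Bd_def by (intro tendsto_add tendsto_mult tendsto_const a b)
  qed
  hence B0: "Bd \<longlonglongrightarrow> 0" by simp
  have T0: "0 \<le> Tot (\<Psi> j)" for j unfolding Tot_def H_norm_def Lw_norm_def LQ_norm_def by simp
  have "(\<lambda>j. Tot (\<Psi> j)) \<longlonglongrightarrow> 0"
    by (rule tendsto_sandwich[OF _ _ tendsto_const B0]) (use T0 \<Psi>(2) in auto)
  thus "\<exists>\<phi>. (\<forall>k. lipc \<Omega> (\<phi> k)) \<and>
              (\<lambda>k. H_norm p Q v \<Omega> (\<lambda>x. \<phi> k x - u x) (\<lambda>x. lgrad (\<phi> k) x - g x)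
                   + Lw_norm 2 v \<Omega> (\<lambda>x. \<phi> k x - u x)) \<longlonglongrightarrow> 0"
    using \<Psi>(1) unfolding Tot_def by blast
qed


end
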